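(* Fix the minority ratio $r$ of the Biased Preferential Attachment Model (BPAM) described in the context. For $x\in(0,1]$ define $$F^{(t)}(x)=\frac{MF^{(t)}(R,x,r)}{MF^{(t)}(B,x,r)}=\frac{q_{RB}(x)}{q_{BB}(x)},$$ where $x$ is the homophily parameter, and $q_{RB}(x), q_{BB}(x)$ are as defined in the context with $\rho=x$ and with $\alpha=\alpha(x)$ the asymptotic red edge fraction for that homophily parameter. Then for every integer $t\geq 1$, $F^{(t)}$ is an increasing function on $(0,1]$ and $F^{(t)}(1)=1$.
   Context: The BPAM with two communities (red $R$, blue $B$) grows a directed network one node at a time. A new node is labeled $R$ with probability $r$ and $B$ with probability $1-r$, where $0< r\le 1/2$. The new node picks a target with probability proportional to current degree. If the two labels differ, the edge is accepted with probability $\rho\in[0,1]$ (the homophily parameter); otherwise the choice is repeated until an edge forms. This is repeated $d$ times, so every node has outdegree $d$. Let $\alpha=\alpha(\rho)$ be the limit as $N\to\infty$ of the expected fraction of total degree belonging to red nodes. It is characterized as the equilibrium (fixed point) satisfying $$\alpha=\tfrac12\Big(r+\tfrac{r\alpha}{\alpha+\rho-\alpha\rho}+\tfrac{\alpha\rho(1-r)}{\alpha\rho+1-\alpha}\Big),$$ and it satisfies $\alpha<r$. Define $$p^{out}_{RB}=\frac{\rho(1-\alpha)}{\alpha+\rho(1-\alpha)},\qquad p^{out}_{BB}=\frac{1-\alpha}{\rho\alpha+1-\alpha}.$$ Let $D_B=\frac{r\rho}{\alpha+\rho(1-\alpha)}+\frac{1-r}{\alpha\rho+1-\alpha}$ and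 $D_R=\frac{r}{\alpha+\rho(1-\alpha)}+\frac{\rho(1-r)}{\alpha\rho+1-\alpha}$. Define $$p^{in}_{BB}=\frac{(1-r)/(\alpha\rho+1-\alpha)}{D_B},\qquad p^{in}_{BR}=\frac{\rho r/(\alpha+\rho(1-\alpha))}{D_B},$$ $$p^{in}_{RR}=\frac{r/(\alpha+\rho(1-\alpha))}{D_R},\qquad p^{in}_{RB}=\frac{\rho(1-r)/(\alpha\rho+1-\alpha)}{D_R}.$$ Set $$q_{BB}=p^{in}_{BB}p^{out}_{BB}+p^{in}_{BR}p^{out}_{RB},\qquad q_{RB}=p^{in}_{RB}p^{out}_{BB}+p^{in}_{RR}p^{out}_{RB}.$$ In the paper's mean-field analysis of HITS, the multiplicative factors are $MF^{(t)}(R)=q_{RB}\tilde d^{in}_t(B)$ and $MF^{(t)}(B)=q_{BB}\tilde d^{in}_t(B)$. Here $\tilde d^{in}_t(B)=\sum_{u\in B}(d^{in}(u))^t/\sum_{u\in B}d^{in}(u)$ is the size-biased $t$-th indegree moment of the blue nodes, so their ratio is $q_{RB}/q_{BB}$. *)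

theory Defs
  imports "HOL-Analysis.Analysis"
begin

text \<open>BPAM equilibrium equation for the red degree fraction a, with minority
ratio r and homophily parameter \<rho>.\<close>
definition bpam_eq :: "real \<Rightarrow> real \<Rightarrow> real \<Rightarrow> bool" where
  "bpam_eq r \<rho> a \<longleftrightarrow>
     a = (1/2) * (r + r * a / (a + \<rho> - a * \<rho>) + a * \<rho> * (1 - r) / (a * \<rho> + 1 - a))"

definition bpam_alpha :: "real \<Rightarrow> real \<Rightarrow> real" where
  "bpam_alpha r \<rho> = (THE a. 0 < a \<and> a < 1 \<and> bpam_eq r \<rho> a)"

definition p_out_RB :: "real \<Rightarrow> real \<Rightarrow> real" where
  "p_out_RB \<rho> a = \<rho> * (1 - a) / (a + \<rho> * (1 - a))"
definition p_out_BB :: "real \<Rightarrow> real \<Rightarrow> real" where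
  "p_out_BB \<rho> a = (1 - a) / (\<rho> * a + 1 - a)"

definition D_B :: "real \<Rightarrow> real \<Rightarrow> real \<Rightarrow> real" where
  "D_B r \<rho> a = r * \<rho> / (a + \<rho> * (1 - a)) + (1 - r) / (a * \<rho> + 1 - a)"
definition D_R :: "real \<Rightarrow> real \<Rightarrow> real \<Rightarrow> real" where
  "D_R r \<rho> a = r / (a + \<rho> * (1 - a)) + \<rho> * (1 - r) / (a * \<rho> + 1 - a)"

definition p_in_BB :: "real \<Rightarrow> real \<Rightarrow> real \<Rightarrow> real" where
  "p_in_BB r \<rho> a = ((1 - r) / (a * \<rho> + 1 - a)) / D_B r \<rho> a"
definition p_in_BR :: "real \<Rightarrow> real \<Rightarrow> real \<Rightarrow> real" where
  "p_in_BR r \<rho> a = (\<rho> * r / (a + \<rho> * (1 - a))) / D_B r \<rho> a"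
definition p_in_RR :: "real \<Rightarrow> real \<Rightarrow> real \<Rightarrow> real" where
  "p_in_RR r \<rho> a = (r / (a + \<rho> * (1 - a))) / D_R r \<rho> a"
definition p_in_RB :: "real \<Rightarrow> real \<Rightarrow> real \<Rightarrow> real" where
  "p_in_RB r \<rho> a = (\<rho> * (1 - r) / (a * \<rho> + 1 - a)) / D_R r \<rho> a"

definition q_BB :: "real \<Rightarrow> real \<Rightarrow> real" where
  "q_BB r x = (let a = bpam_alpha r x in
     p_in_BB r x a * p_out_BB x a + p_in_BR r x a * p_out_RB x a)"
definition q_RB :: "real \<Rightarrow> real \<Rightarrow> real" where
  "q_RB r x = (let a = bpam_alpha r x in
     p_in_RB r x a * p_out_BB x a + p_in_RR r x a * p_out_RB x a)"

text \<open>Ratio of the HITS multiplicative factors MF^(t)(R)/MF^(t)(B); the common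
factor (size-biased t-th indegree moment of blue nodes) cancels.\<close>
definition F_ratio :: "nat \<Rightarrow> real \<Rightarrow> real \<Rightarrow> real" where
  "F_ratio t r x = q_RB r x / q_BB r x"

end

theory Submission
  imports Defs
begin


definition Rn :: "real \<Rightarrow> real \<Rightarrow> real" where
  "Rn p z = z*(z-p)*(2+p-p*z)"
definition Rd :: "real \<Rightarrow> real \<Rightarrow> real" where
  "Rd p z = (1+z)*(2*z-p-p*z^2)"
definition Rf :: "real \<Rightarrow> real \<Rightarrow> real" where
  "Rf p z = Rn p z / Rd p z"

definition Ap :: "real \<Rightarrow> real \<Rightarrow> real" where
  "Ap p z = 2*z - 2*p + 2*p*z - 2*p*z^2 - p^2 + 2*p^2*z - p^2*z^2"

definition Bp :: "real \<Rightarrow> real \<Rightarrow> real" where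
  "Bp p z = 2*z - p + p*z - 2*p*z^2 - p^2 + p^2*z"

definition Cp :: "real \<Rightarrow> real \<Rightarrow> real" where
  "Cp p z = 2*z^2 - p*z + p*z^2 - 2*p*z^3 + 2*p^2*z + p^2*z^2 - p^2*z^3 - 2*p^3 + p^3*z - p^3*z^2 - p^4 + p^4*z"

definition Dp :: "real \<Rightarrow> real \<Rightarrow> real" where
  "Dp p z = 2*z - 2*p + p*z - p*z^2 + p^2*z - p^2*z^2"

definition RnZ :: "real \<Rightarrow> real \<Rightarrow> real" where
  "RnZ p z = 4*z - 2*p + 2*p*z - 3*p*z^2 - p^2 + 2*p^2*z"

definition RdZ :: "real \<Rightarrow> real \<Rightarrow> real" where
  "RdZ p z = 2 + 4*z - p - 2*p*z - 3*p*z^2"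

definition HnZ :: "real \<Rightarrow> real \<Rightarrow> real" where
  "HnZ p z = 8*p*z + 12*p*z^2 - 6*p^2 - 6*p^2*z^2 - 32*p^2*z^3 - 6*p^3 + 12*p^3*z + 18*p^3*z^2 - 16*p^3*z^3 + 20*p^3*z^4 - 4*p^4 + 4*p^4*z + 6*p^4*z^2 - 20*p^4*z^3 + 10*p^4*z^4 - 2*p^5 + 6*p^5*z^2 - 4*p^5*z^3"

definition HdZ :: "real \<Rightarrow> real \<Rightarrow> real" where
  "HdZ p z = 12*z^2 - 12*p*z + 12*p*z^2 - 24*p*z^3 + 2*p^2 + 2*p^2*z + 30*p^2*z^2 - 28*p^2*z^3 + 10*p^2*z^4 - 8*p^3 + 2*p^3*z + 3*p^3*z^2 - 20*p^3*z^3 + 15*p^3*z^4 - 6*p^4 + 18*p^4*z - 9*p^4*z^2 - 4*p^4*z^3 + 5*p^4*z^4 - 5*p^5 + 10*p^5*z - 9*p^5*z^2 + 4*p^5*z^3 - p^6 + 4*p^6*z - 3*p^6*z^2"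

definition WR :: "real \<Rightarrow> real \<Rightarrow> real" where
  "WR p z = 4*z^2 - 4*p*z + 4*p*z^2 - 4*p*z^3 + 2*p^2 - 2*p^2*z + 4*p^2*z^2 - 2*p^2*z^3 + 2*p^2*z^4 + p^3 - 2*p^3*z - 2*p^3*z^2 - 2*p^3*z^3 + p^3*z^4"

definition WH :: "real \<Rightarrow> real \<Rightarrow> real" where
  "WH p z = 16*p*z^4 - 48*p^2*z^3 + 40*p^2*z^4 - 48*p^2*z^5 + 8*p^2*z^6 + 52*p^3*z^2 - 112*p^3*z^3 + 156*p^3*z^4 - 152*p^3*z^5 + 56*p^3*z^6 - 16*p^3*z^7 - 24*p^4*z + 122*p^4*z^2 - 176*p^4*z^3 + 352*p^4*z^4 - 192*p^4*z^5 + 182*p^4*z^6 - 32*p^4*z^7 + 8*p^4*z^8 + 4*p^5 - 64*p^5*z + 84*p^5*z^2 - 316*p^5*z^3 + 168*p^5*z^4 - 304*p^5*z^5 + 96*p^5*z^6 - 76*p^5*z^7 + 8*p^5*z^8 + 14*p^6 - 18*p^6*z + 120*p^6*z^2 + 12*p^6*z^3 + 94*p^6*z^4 + 54*p^6*z^5 + 32*p^6*z^6 - 8*p^6*z^7 + 4*p^6*z^8 + 2*p^7 - 4*p^7*z - 73*p^7*z^2 + 140*p^7*z^3 - 295*p^7*z^4 + 204*p^7*z^5 - 131*p^7*z^6 + 52*p^7*z^7 - 7*p^7*z^8 - 8*p^8 + 36*p^8*z - 140*p^8*z^2 + 268*p^8*z^3 - 294*p^8*z^4 + 260*p^8*z^5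 - 148*p^8*z^6 + 52*p^8*z^7 - 10*p^8*z^8 - 7*p^9 + 48*p^9*z - 112*p^9*z^2 + 168*p^9*z^3 - 178*p^9*z^4 + 136*p^9*z^5 - 76*p^9*z^6 + 24*p^9*z^7 - 3*p^9*z^8 - 4*p^10 + 22*p^10*z - 46*p^10*z^2 + 56*p^10*z^3 - 52*p^10*z^4 + 38*p^10*z^5 - 18*p^10*z^6 + 4*p^10*z^7 - p^11 + 4*p^11*z - 7*p^11*z^2 + 8*p^11*z^3 - 7*p^11*z^4 + 4*p^11*z^5 - p^11*z^6"

definition rn :: "real \<Rightarrow> real \<Rightarrow> real" where
  "rn m p = - 2*p^2*m + 2*p^2*m^2 - p^3*m + p^3*m^2 + p^4*m^2 - p^4*m^3"

definition rd :: "real \<Rightarrow> real \<Rightarrow> real" where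
  "rd m p = - p + 2*p*m - p^2*m + 2*p^2*m^2 - p^3*m^2 - p^4*m^3"

definition hn :: "real \<Rightarrow> real \<Rightarrow> real" where
  "hn m p = 2*p^3 - 6*p^3*m + 4*p^3*m^2 + 3*p^4 - 6*p^4*m + 4*p^4*m^3 + p^5 - 4*p^5*m + 6*p^5*m^2 - 2*p^5*m^3 - 2*p^6*m + 2*p^6*m^2 + 6*p^6*m^3 - 8*p^6*m^4 + 2*p^7*m^3 - 4*p^7*m^4 + 2*p^8*m^3 - 5*p^8*m^4 + 4*p^8*m^5 - p^9*m^4 + 2*p^9*m^5"

definition hdr :: "real \<Rightarrow> real \<Rightarrow> real" where
  "hdr m p = 2*p^3*m - 6*p^3*m^2 + 4*p^3*m^3 + 4*p^4 - 8*p^4*m + p^4*m^2 + 4*p^4*m^3 + 2*p^5 - 6*p^5*m + p^5*m^2 + 10*p^5*m^3 - 6*p^5*m^4 - 5*p^6*m + 9*p^6*m^2 + p^6*m^3 - 7*p^6*m^4 - p^7*m + 5*p^7*m^2 - 3*p^7*m^3 - 5*p^7*m^4 + 2*p^7*m^5 + 2*p^8*m^2 - 3*p^8*m^3 - p^8*m^4 + 3*p^8*m^5 - p^9*m^3 + p^9*m^4 + p^9*m^5"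

definition rnP :: "real \<Rightarrow> real \<Rightarrow> real" where
  "rnP m p = - 4*p*m + 4*p*m^2 - 3*p^2*m + 3*p^2*m^2 + 4*p^3*m^2 - 4*p^3*m^3"

definition rdP :: "real \<Rightarrow> real \<Rightarrow> real" where
  "rdP m p = - 1 + 2*m - 2*p*m + 4*p*m^2 - 3*p^2*m^2 - 4*p^3*m^3"

definition hnP :: "real \<Rightarrow> real \<Rightarrow> real" where
  "hnP m p = 6*p^2 - 18*p^2*m + 12*p^2*m^2 + 12*p^3 - 24*p^3*m + 16*p^3*m^3 + 5*p^4 - 20*p^4*m + 30*p^4*m^2 - 10*p^4*m^3 - 12*p^5*m + 12*p^5*m^2 + 36*p^5*m^3 - 48*p^5*m^4 + 14*p^6*m^3 - 28*p^6*m^4 + 16*p^7*m^3 - 40*p^7*m^4 + 32*p^7*m^5 - 9*p^8*m^4 + 18*p^8*m^5"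

definition hdP :: "real \<Rightarrow> real \<Rightarrow> real" where
  "hdP m p = 6*p^2*m - 18*p^2*m^2 + 12*p^2*m^3 + 16*p^3 - 32*p^3*m + 4*p^3*m^2 + 16*p^3*m^3 + 10*p^4 - 30*p^4*m + 5*p^4*m^2 + 50*p^4*m^3 - 30*p^4*m^4 - 30*p^5*m + 54*p^5*m^2 + 6*p^5*m^3 - 42*p^5*m^4 - 7*p^6*m + 35*p^6*m^2 - 21*p^6*m^3 - 35*p^6*m^4 + 14*p^6*m^5 + 16*p^7*m^2 - 24*p^7*m^3 - 8*p^7*m^4 + 24*p^7*m^5 - 9*p^8*m^3 + 9*p^8*m^4 + 9*p^8*m^5"

definition WRr :: "real \<Rightarrow> real \<Rightarrow> real" where
  "WRr m p = 2*p^2*m - 6*p^2*m^2 + 4*p^2*m^3 + 2*p^3*m - 6*p^3*m^2 + 4*p^3*m^3 - 2*p^4*m^2 + 4*p^4*m^3 - 2*p^4*m^4 - 2*p^5*m^3 + 2*p^5*m^4 - 2*p^6*m^4 + 2*p^6*m^5"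

definition WHr :: "real \<Rightarrow> real \<Rightarrow> real" where
  "WHr m p = - 8*p^6 + 46*p^6*m - 96*p^6*m^2 + 78*p^6*m^3 + 4*p^6*m^4 - 40*p^6*m^5 + 16*p^6*m^6 - 8*p^7 + 52*p^7*m - 120*p^7*m^2 + 100*p^7*m^3 + 24*p^7*m^4 - 80*p^7*m^5 + 32*p^7*m^6 - 2*p^8 + 36*p^8*m - 138*p^8*m^2 + 176*p^8*m^3 + 36*p^8*m^4 - 288*p^8*m^5 + 252*p^8*m^6 - 72*p^8*m^7 + 22*p^9*m - 130*p^9*m^2 + 274*p^9*m^3 - 174*p^9*m^4 - 168*p^9*m^5 + 280*p^9*m^6 - 104*p^9*m^7 + 10*p^10*m - 96*p^10*m^2 + 294*p^10*m^3 - 316*p^10*m^4 - 106*p^10*m^5 + 508*p^10*m^6 - 398*p^10*m^7 + 104*p^10*m^8 + 2*p^11*m - 42*p^11*m^2 + 194*p^11*m^3 - 370*p^11*m^4 + 240*p^11*m^5 + 172*p^11*m^6 - 316*p^11*m^7 + 120*p^11*m^8 - 8*p^12*m^2 + 72*p^12*m^3 - 220*p^12*m^4 + 256*p^12*m^5 + 12*p^12*m^6 - 280*p^12*m^7 + 224*p^12*m^8 - 56*p^12*m^9 + 12*p^13*m^3 - 68*p^13*m^4 + 146*p^13*m^5 - 110*p^13*m^6 - 62*p^13*m^7 + 138*p^13*m^8 - 56*p^13*m^9 - 8*p^14*m^4 + 38*p^14*m^5 - 60*p^14*m^6 + 18*p^14*m^7 + 40*p^14*m^8 - 36*p^14*m^9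 + 8*p^14*m^10 + 2*p^15*m^5 - 10*p^15*m^6 + 14*p^15*m^7 + 2*p^15*m^8 - 16*p^15*m^9 + 8*p^15*m^10 + 2*p^16*m^8 - 4*p^16*m^9 + 2*p^16*m^10"

lemma WR_pos:
  assumes "0 < p" "p < 1" "p < z" "z < 1"
  shows "0 < WR p z"
proof -
  have b: "0 < 1 - p" "0 < z - p" "0 < 1 - z" using assms by auto
  have id: "WR p z * ((1-p)^4) = 8*(1-p)*p^6*(1-z)^4 + 32*(1-p)*p^6*(z-p)*(1-z)^3 + 48*(1-p)*p^6*(z-p)^2*(1-z)^2 + 32*(1-p)*p^6*(z-p)^3*(1-z) + 8*(1-p)*p^6*(z-p)^4 + 28*(1-p)^2*p^5*(1-z)^4 + 120*(1-p)^2*p^5*(z-p)*(1-z)^3 + 196*(1-p)^2*p^5*(z-p)^2*(1-z)^2 + 144*(1-p)^2*p^5*(z-p)^3*(1-z) + 40*(1-p)^2*p^5*(z-p)^4 + 30*(1-p)^3*p^4*(1-z)^4 + 168*(1-p)^3*p^4*(z-p)*(1-z)^3 + 326*(1-p)^3*p^4*(z-p)^2*(1-z)^2 + 272*(1-p)^3*p^4*(z-p)^3*(1-z) + 84*(1-p)^3*p^4*(z-p)^4 + 13*(1-p)^4*p^3*(1-z)^4 + 110*(1-p)^4*p^3*(z-p)*(1-z)^3 + 284*(1-p)^4*p^3*(z-p)^2*(1-z)^2 + 280*(1-p)^4*p^3*(z-p)^3*(1-z) + 96*(1-p)^4*p^3*(z-p)^4 + 2*(1-p)^5*p^2*(1-z)^4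 + 34*(1-p)^5*p^2*(z-p)*(1-z)^3 + 138*(1-p)^5*p^2*(z-p)^2*(1-z)^2 + 168*(1-p)^5*p^2*(z-p)^3*(1-z) + 64*(1-p)^5*p^2*(z-p)^4 + 4*(1-p)^6*p*(z-p)*(1-z)^3 + 36*(1-p)^6*p*(z-p)^2*(1-z)^2 + 56*(1-p)^6*p*(z-p)^3*(1-z) + 24*(1-p)^6*p*(z-p)^4 + 4*(1-p)^7*(z-p)^2*(1-z)^2 + 8*(1-p)^7*(z-p)^3*(1-z) + 4*(1-p)^7*(z-p)^4"
    unfolding WR_def by algebra
  have "0 < 8*(1-p)*p^6*(1-z)^4 + 32*(1-p)*p^6*(z-p)*(1-z)^3 + 48*(1-p)*p^6*(z-p)^2*(1-z)^2 + 32*(1-p)*p^6*(z-p)^3*(1-z) + 8*(1-p)*p^6*(z-p)^4 + 28*(1-p)^2*p^5*(1-z)^4 + 120*(1-p)^2*p^5*(z-p)*(1-z)^3 + 196*(1-p)^2*p^5*(z-p)^2*(1-z)^2 + 144*(1-p)^2*p^5*(z-p)^3*(1-z) + 40*(1-p)^2*p^5*(z-p)^4 + 30*(1-p)^3*p^4*(1-z)^4 + 168*(1-p)^3*p^4*(z-p)*(1-z)^3 + 326*(1-p)^3*p^4*(z-p)^2*(1-z)^2 + 272*(1-p)^3*p^4*(z-p)^3*(1-z) + 84*(1-p)^3*p^4*(z-p)^4 + 13*(1-p)^4*p^3*(1-z)^4 + 110*(1-p)^4*p^3*(z-p)*(1-z)^3 + 284*(1-p)^4*p^3*(z-p)^2*(1-z)^2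 + 280*(1-p)^4*p^3*(z-p)^3*(1-z) + 96*(1-p)^4*p^3*(z-p)^4 + 2*(1-p)^5*p^2*(1-z)^4 + 34*(1-p)^5*p^2*(z-p)*(1-z)^3 + 138*(1-p)^5*p^2*(z-p)^2*(1-z)^2 + 168*(1-p)^5*p^2*(z-p)^3*(1-z) + 64*(1-p)^5*p^2*(z-p)^4 + 4*(1-p)^6*p*(z-p)*(1-z)^3 + 36*(1-p)^6*p*(z-p)^2*(1-z)^2 + 56*(1-p)^6*p*(z-p)^3*(1-z) + 24*(1-p)^6*p*(z-p)^4 + 4*(1-p)^7*(z-p)^2*(1-z)^2 + 8*(1-p)^7*(z-p)^3*(1-z) + 4*(1-p)^7*(z-p)^4"
    using assms b by (intro add_pos_pos mult_pos_pos zero_less_power; simp)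
  then have "0 < WR p z * ((1-p)^4)" using id by simp
  moreover have "0 < (1-p)^4" using assms b by (intro mult_pos_pos zero_less_power; simp)
  ultimately show ?thesis by (rule zero_less_mult_pos2)
qed

lemma WH_pos:
  assumes "0 < p" "p < 1" "p < z" "z < 1"
  shows "0 < WH p z"
proof -
  have b: "0 < 1 - p" "0 < z - p" "0 < 1 - z" using assms by auto
  have id: "WH p z * ((1-p)^8) = 128*(1-p)^5*p^14*(z-p)*(1-z)^7 + 800*(1-p)^5*p^14*(z-p)^2*(1-z)^6 + 2112*(1-p)^5*p^14*(z-p)^3*(1-z)^5 + 3040*(1-p)^5*p^14*(z-p)^4*(1-z)^4 + 2560*(1-p)^5*p^14*(z-p)^5*(1-z)^3 + 1248*(1-p)^5*p^14*(z-p)^6*(1-z)^2 + 320*(1-p)^5*p^14*(z-p)^7*(1-z) + 32*(1-p)^5*p^14*(z-p)^8 + 896*(1-p)^6*p^13*(z-p)*(1-z)^7 + 6288*(1-p)^6*p^13*(z-p)^2*(1-z)^6 + 18336*(1-p)^6*p^13*(z-p)^3*(1-z)^5 + 28800*(1-p)^6*p^13*(z-p)^4*(1-z)^4 + 26240*(1-p)^6*p^13*(z-p)^5*(1-z)^3 + 13776*(1-p)^6*p^13*(z-p)^6*(1-z)^2 + 3808*(1-p)^6*p^13*(z-p)^7*(1-z) + 416*(1-p)^6*p^13*(z-p)^8 + 2656*(1-p)^7*p^12*(z-p)*(1-z)^7 + 21776*(1-p)^7*p^12*(z-p)^2*(1-z)^6 + 71552*(1-p)^7*p^12*(z-p)^3*(1-z)^5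 + 124032*(1-p)^7*p^12*(z-p)^4*(1-z)^4 + 123136*(1-p)^7*p^12*(z-p)^5*(1-z)^3 + 69920*(1-p)^7*p^12*(z-p)^6*(1-z)^2 + 20864*(1-p)^7*p^12*(z-p)^7*(1-z) + 2480*(1-p)^7*p^12*(z-p)^8 + 4416*(1-p)^8*p^11*(z-p)*(1-z)^7 + 43896*(1-p)^8*p^11*(z-p)^2*(1-z)^6 + 165936*(1-p)^8*p^11*(z-p)^3*(1-z)^5 + 321448*(1-p)^8*p^11*(z-p)^4*(1-z)^4 + 350336*(1-p)^8*p^11*(z-p)^5*(1-z)^3 + 216016*(1-p)^8*p^11*(z-p)^6*(1-z)^2 + 69648*(1-p)^8*p^11*(z-p)^7*(1-z) + 8976*(1-p)^8*p^11*(z-p)^8 + 4568*(1-p)^9*p^10*(z-p)*(1-z)^7 + 57274*(1-p)^9*p^10*(z-p)^2*(1-z)^6 + 254788*(1-p)^9*p^10*(z-p)^3*(1-z)^5 + 559354*(1-p)^9*p^10*(z-p)^4*(1-z)^4 + 674400*(1-p)^9*p^10*(z-p)^5*(1-z)^3 + 453124*(1-p)^9*p^10*(z-p)^6*(1-z)^2 + 157936*(1-p)^9*p^10*(z-p)^7*(1-z) + 22000*(1-p)^9*p^10*(z-p)^8 + 3064*(1-p)^10*p^9*(z-p)*(1-z)^7 + 50829*(1-p)^10*p^9*(z-p)^2*(1-z)^6 + 273106*(1-p)^10*p^9*(z-p)^3*(1-z)^5 + 690366*(1-p)^10*p^9*(z-p)^4*(1-z)^4 + 927864*(1-p)^10*p^9*(z-p)^5*(1-z)^3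 + 681252*(1-p)^10*p^9*(z-p)^6*(1-z)^2 + 256704*(1-p)^10*p^9*(z-p)^7*(1-z) + 38544*(1-p)^10*p^9*(z-p)^8 + 1338*(1-p)^11*p^8*(z-p)*(1-z)^7 + 31332*(1-p)^11*p^8*(z-p)^2*(1-z)^6 + 209870*(1-p)^11*p^8*(z-p)^3*(1-z)^5 + 622194*(1-p)^11*p^8*(z-p)^4*(1-z)^4 + 939008*(1-p)^11*p^8*(z-p)^5*(1-z)^3 + 754892*(1-p)^11*p^8*(z-p)^6*(1-z)^2 + 307392*(1-p)^11*p^8*(z-p)^7*(1-z) + 49632*(1-p)^11*p^8*(z-p)^8 + 368*(1-p)^12*p^7*(z-p)*(1-z)^7 + 13423*(1-p)^12*p^7*(z-p)^2*(1-z)^6 + 116778*(1-p)^12*p^7*(z-p)^3*(1-z)^5 + 415004*(1-p)^12*p^7*(z-p)^4*(1-z)^4 + 707944*(1-p)^12*p^7*(z-p)^5*(1-z)^3 + 623828*(1-p)^12*p^7*(z-p)^6*(1-z)^2 + 274272*(1-p)^12*p^7*(z-p)^7*(1-z) + 47520*(1-p)^12*p^7*(z-p)^8 + 58*(1-p)^13*p^6*(z-p)*(1-z)^7 + 3918*(1-p)^13*p^6*(z-p)^2*(1-z)^6 + 46858*(1-p)^13*p^6*(z-p)^3*(1-z)^5 + 205086*(1-p)^13*p^6*(z-p)^4*(1-z)^4 + 397680*(1-p)^13*p^6*(z-p)^5*(1-z)^3 + 384132*(1-p)^13*p^6*(z-p)^6*(1-z)^2 + 182112*(1-p)^13*p^6*(z-p)^7*(1-z)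 + 33792*(1-p)^13*p^6*(z-p)^8 + 4*(1-p)^14*p^5*(z-p)*(1-z)^7 + 742*(1-p)^14*p^5*(z-p)^2*(1-z)^6 + 13284*(1-p)^14*p^5*(z-p)^3*(1-z)^5 + 74222*(1-p)^14*p^5*(z-p)^4*(1-z)^4 + 164360*(1-p)^14*p^5*(z-p)^5*(1-z)^3 + 173884*(1-p)^14*p^5*(z-p)^6*(1-z)^2 + 88736*(1-p)^14*p^5*(z-p)^7*(1-z) + 17600*(1-p)^14*p^5*(z-p)^8 + 82*(1-p)^15*p^4*(z-p)^2*(1-z)^6 + 2540*(1-p)^15*p^4*(z-p)^3*(1-z)^5 + 19118*(1-p)^15*p^4*(z-p)^4*(1-z)^4 + 48544*(1-p)^15*p^4*(z-p)^5*(1-z)^3 + 56164*(1-p)^15*p^4*(z-p)^6*(1-z)^2 + 30784*(1-p)^15*p^4*(z-p)^7*(1-z) + 6512*(1-p)^15*p^4*(z-p)^8 + 4*(1-p)^16*p^3*(z-p)^2*(1-z)^6 + 296*(1-p)^16*p^3*(z-p)^3*(1-z)^5 + 3312*(1-p)^16*p^3*(z-p)^4*(1-z)^4 + 9688*(1-p)^16*p^3*(z-p)^5*(1-z)^3 + 12236*(1-p)^16*p^3*(z-p)^6*(1-z)^2 + 7184*(1-p)^16*p^3*(z-p)^7*(1-z) + 1616*(1-p)^16*p^3*(z-p)^8 + 16*(1-p)^17*p^2*(z-p)^3*(1-z)^5 + 344*(1-p)^17*p^2*(z-p)^4*(1-z)^4 + 1168*(1-p)^17*p^2*(z-p)^5*(1-z)^3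 + 1608*(1-p)^17*p^2*(z-p)^6*(1-z)^2 + 1008*(1-p)^17*p^2*(z-p)^7*(1-z) + 240*(1-p)^17*p^2*(z-p)^8 + 16*(1-p)^18*p*(z-p)^4*(1-z)^4 + 64*(1-p)^18*p*(z-p)^5*(1-z)^3 + 96*(1-p)^18*p*(z-p)^6*(1-z)^2 + 64*(1-p)^18*p*(z-p)^7*(1-z) + 16*(1-p)^18*p*(z-p)^8"
    unfolding WH_def by algebra
  have "0 < 128*(1-p)^5*p^14*(z-p)*(1-z)^7 + 800*(1-p)^5*p^14*(z-p)^2*(1-z)^6 + 2112*(1-p)^5*p^14*(z-p)^3*(1-z)^5 + 3040*(1-p)^5*p^14*(z-p)^4*(1-z)^4 + 2560*(1-p)^5*p^14*(z-p)^5*(1-z)^3 + 1248*(1-p)^5*p^14*(z-p)^6*(1-z)^2 + 320*(1-p)^5*p^14*(z-p)^7*(1-z) + 32*(1-p)^5*p^14*(z-p)^8 + 896*(1-p)^6*p^13*(z-p)*(1-z)^7 + 6288*(1-p)^6*p^13*(z-p)^2*(1-z)^6 + 18336*(1-p)^6*p^13*(z-p)^3*(1-z)^5 + 28800*(1-p)^6*p^13*(z-p)^4*(1-z)^4 + 26240*(1-p)^6*p^13*(z-p)^5*(1-z)^3 + 13776*(1-p)^6*p^13*(z-p)^6*(1-z)^2 + 3808*(1-p)^6*p^13*(z-p)^7*(1-z) + 416*(1-p)^6*p^13*(z-p)^8 + 2656*(1-p)^7*p^12*(z-p)*(1-z)^7 + 21776*(1-p)^7*p^12*(z-p)^2*(1-z)^6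 + 71552*(1-p)^7*p^12*(z-p)^3*(1-z)^5 + 124032*(1-p)^7*p^12*(z-p)^4*(1-z)^4 + 123136*(1-p)^7*p^12*(z-p)^5*(1-z)^3 + 69920*(1-p)^7*p^12*(z-p)^6*(1-z)^2 + 20864*(1-p)^7*p^12*(z-p)^7*(1-z) + 2480*(1-p)^7*p^12*(z-p)^8 + 4416*(1-p)^8*p^11*(z-p)*(1-z)^7 + 43896*(1-p)^8*p^11*(z-p)^2*(1-z)^6 + 165936*(1-p)^8*p^11*(z-p)^3*(1-z)^5 + 321448*(1-p)^8*p^11*(z-p)^4*(1-z)^4 + 350336*(1-p)^8*p^11*(z-p)^5*(1-z)^3 + 216016*(1-p)^8*p^11*(z-p)^6*(1-z)^2 + 69648*(1-p)^8*p^11*(z-p)^7*(1-z) + 8976*(1-p)^8*p^11*(z-p)^8 + 4568*(1-p)^9*p^10*(z-p)*(1-z)^7 + 57274*(1-p)^9*p^10*(z-p)^2*(1-z)^6 + 254788*(1-p)^9*p^10*(z-p)^3*(1-z)^5 + 559354*(1-p)^9*p^10*(z-p)^4*(1-z)^4 + 674400*(1-p)^9*p^10*(z-p)^5*(1-z)^3 + 453124*(1-p)^9*p^10*(z-p)^6*(1-z)^2 + 157936*(1-p)^9*p^10*(z-p)^7*(1-z) + 22000*(1-p)^9*p^10*(z-p)^8 + 3064*(1-p)^10*p^9*(z-p)*(1-z)^7 + 50829*(1-p)^10*p^9*(z-p)^2*(1-z)^6 + 273106*(1-p)^10*p^9*(z-p)^3*(1-z)^5 + 690366*(1-p)^10*p^9*(z-p)^4*(1-z)^4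 + 927864*(1-p)^10*p^9*(z-p)^5*(1-z)^3 + 681252*(1-p)^10*p^9*(z-p)^6*(1-z)^2 + 256704*(1-p)^10*p^9*(z-p)^7*(1-z) + 38544*(1-p)^10*p^9*(z-p)^8 + 1338*(1-p)^11*p^8*(z-p)*(1-z)^7 + 31332*(1-p)^11*p^8*(z-p)^2*(1-z)^6 + 209870*(1-p)^11*p^8*(z-p)^3*(1-z)^5 + 622194*(1-p)^11*p^8*(z-p)^4*(1-z)^4 + 939008*(1-p)^11*p^8*(z-p)^5*(1-z)^3 + 754892*(1-p)^11*p^8*(z-p)^6*(1-z)^2 + 307392*(1-p)^11*p^8*(z-p)^7*(1-z) + 49632*(1-p)^11*p^8*(z-p)^8 + 368*(1-p)^12*p^7*(z-p)*(1-z)^7 + 13423*(1-p)^12*p^7*(z-p)^2*(1-z)^6 + 116778*(1-p)^12*p^7*(z-p)^3*(1-z)^5 + 415004*(1-p)^12*p^7*(z-p)^4*(1-z)^4 + 707944*(1-p)^12*p^7*(z-p)^5*(1-z)^3 + 623828*(1-p)^12*p^7*(z-p)^6*(1-z)^2 + 274272*(1-p)^12*p^7*(z-p)^7*(1-z) + 47520*(1-p)^12*p^7*(z-p)^8 + 58*(1-p)^13*p^6*(z-p)*(1-z)^7 + 3918*(1-p)^13*p^6*(z-p)^2*(1-z)^6 + 46858*(1-p)^13*p^6*(z-p)^3*(1-z)^5 + 205086*(1-p)^13*p^6*(z-p)^4*(1-z)^4 + 397680*(1-p)^13*p^6*(z-p)^5*(1-z)^3 + 384132*(1-p)^13*p^6*(z-p)^6*(1-z)^2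 + 182112*(1-p)^13*p^6*(z-p)^7*(1-z) + 33792*(1-p)^13*p^6*(z-p)^8 + 4*(1-p)^14*p^5*(z-p)*(1-z)^7 + 742*(1-p)^14*p^5*(z-p)^2*(1-z)^6 + 13284*(1-p)^14*p^5*(z-p)^3*(1-z)^5 + 74222*(1-p)^14*p^5*(z-p)^4*(1-z)^4 + 164360*(1-p)^14*p^5*(z-p)^5*(1-z)^3 + 173884*(1-p)^14*p^5*(z-p)^6*(1-z)^2 + 88736*(1-p)^14*p^5*(z-p)^7*(1-z) + 17600*(1-p)^14*p^5*(z-p)^8 + 82*(1-p)^15*p^4*(z-p)^2*(1-z)^6 + 2540*(1-p)^15*p^4*(z-p)^3*(1-z)^5 + 19118*(1-p)^15*p^4*(z-p)^4*(1-z)^4 + 48544*(1-p)^15*p^4*(z-p)^5*(1-z)^3 + 56164*(1-p)^15*p^4*(z-p)^6*(1-z)^2 + 30784*(1-p)^15*p^4*(z-p)^7*(1-z) + 6512*(1-p)^15*p^4*(z-p)^8 + 4*(1-p)^16*p^3*(z-p)^2*(1-z)^6 + 296*(1-p)^16*p^3*(z-p)^3*(1-z)^5 + 3312*(1-p)^16*p^3*(z-p)^4*(1-z)^4 + 9688*(1-p)^16*p^3*(z-p)^5*(1-z)^3 + 12236*(1-p)^16*p^3*(z-p)^6*(1-z)^2 + 7184*(1-p)^16*p^3*(z-p)^7*(1-z) + 1616*(1-p)^16*p^3*(z-p)^8 + 16*(1-p)^17*p^2*(z-p)^3*(1-z)^5 + 344*(1-p)^17*p^2*(z-p)^4*(1-z)^4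 + 1168*(1-p)^17*p^2*(z-p)^5*(1-z)^3 + 1608*(1-p)^17*p^2*(z-p)^6*(1-z)^2 + 1008*(1-p)^17*p^2*(z-p)^7*(1-z) + 240*(1-p)^17*p^2*(z-p)^8 + 16*(1-p)^18*p*(z-p)^4*(1-z)^4 + 64*(1-p)^18*p*(z-p)^5*(1-z)^3 + 96*(1-p)^18*p*(z-p)^6*(1-z)^2 + 64*(1-p)^18*p*(z-p)^7*(1-z) + 16*(1-p)^18*p*(z-p)^8"
    using assms b by (intro add_pos_pos mult_pos_pos zero_less_power; simp)
  then have "0 < WH p z * ((1-p)^8)" using id by simp
  moreover have "0 < (1-p)^8" using assms b by (intro mult_pos_pos zero_less_power; simp)
  ultimately show ?thesis by (rule zero_less_mult_pos2)
qed

lemma WRr_pos: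
  assumes "0 < p" "1 < m" "m * p < 1"
  shows "0 < WRr m p"
proof -
  have b: "0 < m - 1" "0 < 1 - m * p" "0 < m * p" using assms by auto
  have id: "WRr m p * (m*p)^4 = p^6*(8*(m-1)*(m*p)^4 + 16*(m-1)*(1-m*p)*(m*p)^3 + 18*(m-1)*(1-m*p)^2*(m*p)^2 + 10*(m-1)*(1-m*p)^3*(m*p) + 2*(m-1)*(1-m*p)^4 + 40*(m-1)^2*(m*p)^4 + 96*(m-1)^2*(1-m*p)*(m*p)^3 + 118*(m-1)^2*(1-m*p)^2*(m*p)^2 + 68*(m-1)^2*(1-m*p)^3*(m*p) + 14*(m-1)^2*(1-m*p)^4 + 84*(m-1)^3*(m*p)^4 + 240*(m-1)^3*(1-m*p)*(m*p)^3 + 316*(m-1)^3*(1-m*p)^2*(m*p)^2 + 188*(m-1)^3*(1-m*p)^3*(m*p) + 40*(m-1)^3*(1-m*p)^4 + 96*(m-1)^4*(m*p)^4 + 320*(m-1)^4*(1-m*p)*(m*p)^3 + 444*(m-1)^4*(1-m*p)^2*(m*p)^2 + 272*(m-1)^4*(1-m*p)^3*(m*p) + 60*(m-1)^4*(1-m*p)^4 + 64*(m-1)^5*(m*p)^4 + 240*(m-1)^5*(1-m*p)*(m*p)^3 + 346*(m-1)^5*(1-m*p)^2*(m*p)^2 + 218*(m-1)^5*(1-m*p)^3*(m*p) + 50*(m-1)^5*(1-m*p)^4 + 24*(m-1)^6*(m*p)^4 + 96*(m-1)^6*(1-m*p)*(m*p)^3 + 142*(m-1)^6*(1-m*p)^2*(m*p)^2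 + 92*(m-1)^6*(1-m*p)^3*(m*p) + 22*(m-1)^6*(1-m*p)^4 + 4*(m-1)^7*(m*p)^4 + 16*(m-1)^7*(1-m*p)*(m*p)^3 + 24*(m-1)^7*(1-m*p)^2*(m*p)^2 + 16*(m-1)^7*(1-m*p)^3*(m*p) + 4*(m-1)^7*(1-m*p)^4)"
    unfolding WRr_def by algebra
  have "0 < p^6*(8*(m-1)*(m*p)^4 + 16*(m-1)*(1-m*p)*(m*p)^3 + 18*(m-1)*(1-m*p)^2*(m*p)^2 + 10*(m-1)*(1-m*p)^3*(m*p) + 2*(m-1)*(1-m*p)^4 + 40*(m-1)^2*(m*p)^4 + 96*(m-1)^2*(1-m*p)*(m*p)^3 + 118*(m-1)^2*(1-m*p)^2*(m*p)^2 + 68*(m-1)^2*(1-m*p)^3*(m*p) + 14*(m-1)^2*(1-m*p)^4 + 84*(m-1)^3*(m*p)^4 + 240*(m-1)^3*(1-m*p)*(m*p)^3 + 316*(m-1)^3*(1-m*p)^2*(m*p)^2 + 188*(m-1)^3*(1-m*p)^3*(m*p) + 40*(m-1)^3*(1-m*p)^4 + 96*(m-1)^4*(m*p)^4 + 320*(m-1)^4*(1-m*p)*(m*p)^3 + 444*(m-1)^4*(1-m*p)^2*(m*p)^2 + 272*(m-1)^4*(1-m*p)^3*(m*p) + 60*(m-1)^4*(1-m*p)^4 + 64*(m-1)^5*(m*p)^4 + 240*(m-1)^5*(1-m*p)*(m*p)^3 + 346*(m-1)^5*(1-m*p)^2*(m*p)^2 + 218*(m-1)^5*(1-m*p)^3*(m*p)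 + 50*(m-1)^5*(1-m*p)^4 + 24*(m-1)^6*(m*p)^4 + 96*(m-1)^6*(1-m*p)*(m*p)^3 + 142*(m-1)^6*(1-m*p)^2*(m*p)^2 + 92*(m-1)^6*(1-m*p)^3*(m*p) + 22*(m-1)^6*(1-m*p)^4 + 4*(m-1)^7*(m*p)^4 + 16*(m-1)^7*(1-m*p)*(m*p)^3 + 24*(m-1)^7*(1-m*p)^2*(m*p)^2 + 16*(m-1)^7*(1-m*p)^3*(m*p) + 4*(m-1)^7*(1-m*p)^4)"
    using assms b by (intro add_pos_pos mult_pos_pos zero_less_power; simp)
  then have "0 < WRr m p * (m*p)^4" using id by simp
  moreover have "0 < (m*p)^4" using b(3) by (rule zero_less_power)
  ultimately show ?thesis by (rule zero_less_mult_pos2)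
qed

lemma WHr_pos:
  assumes "0 < p" "1 < m" "m * p < 1"
  shows "0 < WHr m p"
proof -
  have b: "0 < m - 1" "0 < 1 - m * p" "0 < m * p" using assms by auto
  have id: "WHr m p * (m*p)^10 = p^16*(128*(m-1)^2*(1-m*p)^4*(m*p)^6 + 384*(m-1)^2*(1-m*p)^5*(m*p)^5 + 480*(m-1)^2*(1-m*p)^6*(m*p)^4 + 320*(m-1)^2*(1-m*p)^7*(m*p)^3 + 120*(m-1)^2*(1-m*p)^8*(m*p)^2 + 24*(m-1)^2*(1-m*p)^9*(m*p) + 2*(m-1)^2*(1-m*p)^10 + 32*(m-1)^3*(1-m*p)^2*(m*p)^8 + 608*(m-1)^3*(1-m*p)^3*(m*p)^7 + 3600*(m-1)^3*(1-m*p)^4*(m*p)^6 + 8000*(m-1)^3*(1-m*p)^5*(m*p)^5 + 8994*(m-1)^3*(1-m*p)^6*(m*p)^4 + 5714*(m-1)^3*(1-m*p)^7*(m*p)^3 + 2090*(m-1)^3*(1-m*p)^8*(m*p)^2 + 412*(m-1)^3*(1-m*p)^9*(m*p) + 34*(m-1)^3*(1-m*p)^10 + 64*(m-1)^4*(1-m*p)*(m*p)^9 + 1216*(m-1)^4*(1-m*p)^2*(m*p)^8 + 10080*(m-1)^4*(1-m*p)^3*(m*p)^7 + 38368*(m-1)^4*(1-m*p)^4*(m*p)^6 + 72292*(m-1)^4*(1-m*p)^5*(m*p)^5 + 75732*(m-1)^4*(1-m*p)^6*(m*p)^4 + 46632*(m-1)^4*(1-m*p)^7*(m*p)^3 + 16846*(m-1)^4*(1-m*p)^8*(m*p)^2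 + 3312*(m-1)^4*(1-m*p)^9*(m*p) + 274*(m-1)^4*(1-m*p)^10 + 32*(m-1)^5*(m*p)^10 + 1056*(m-1)^5*(1-m*p)*(m*p)^9 + 12432*(m-1)^5*(1-m*p)^2*(m*p)^8 + 73184*(m-1)^5*(1-m*p)^3*(m*p)^7 + 224810*(m-1)^5*(1-m*p)^4*(m*p)^6 + 381542*(m-1)^5*(1-m*p)^5*(m*p)^5 + 380740*(m-1)^5*(1-m*p)^6*(m*p)^4 + 229840*(m-1)^5*(1-m*p)^7*(m*p)^3 + 82694*(m-1)^5*(1-m*p)^8*(m*p)^2 + 16340*(m-1)^5*(1-m*p)^9*(m*p) + 1366*(m-1)^5*(1-m*p)^10 + 320*(m-1)^6*(m*p)^10 + 7040*(m-1)^6*(1-m*p)*(m*p)^9 + 64760*(m-1)^6*(1-m*p)^2*(m*p)^8 + 312616*(m-1)^6*(1-m*p)^3*(m*p)^7 + 841562*(m-1)^6*(1-m*p)^4*(m*p)^6 + 1328952*(m-1)^6*(1-m*p)^5*(m*p)^5 + 1280994*(m-1)^6*(1-m*p)^6*(m*p)^4 + 763752*(m-1)^6*(1-m*p)^7*(m*p)^3 + 275080*(m-1)^6*(1-m*p)^8*(m*p)^2 + 54872*(m-1)^6*(1-m*p)^9*(m*p) + 4656*(m-1)^6*(1-m*p)^10 + 1456*(m-1)^7*(m*p)^10 + 26576*(m-1)^7*(1-m*p)*(m*p)^9 + 208988*(m-1)^7*(1-m*p)^2*(m*p)^8 + 884480*(m-1)^7*(1-m*p)^3*(m*p)^7 +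 2174316*(m-1)^7*(1-m*p)^4*(m*p)^6 + 3257414*(m-1)^7*(1-m*p)^5*(m*p)^5 + 3060434*(m-1)^7*(1-m*p)^6*(m*p)^4 + 1810572*(m-1)^7*(1-m*p)^7*(m*p)^3 + 654692*(m-1)^7*(1-m*p)^8*(m*p)^2 + 132136*(m-1)^7*(1-m*p)^9*(m*p) + 11404*(m-1)^7*(1-m*p)^10 + 3984*(m-1)^8*(m*p)^10 + 64928*(m-1)^8*(1-m*p)*(m*p)^9 + 457164*(m-1)^8*(1-m*p)^2*(m*p)^8 + 1760800*(m-1)^8*(1-m*p)^3*(m*p)^7 + 4048998*(m-1)^8*(1-m*p)^4*(m*p)^6 + 5826844*(m-1)^8*(1-m*p)^5*(m*p)^5 + 5367866*(m-1)^8*(1-m*p)^6*(m*p)^4 + 3160032*(m-1)^8*(1-m*p)^7*(m*p)^3 + 1148836*(m-1)^8*(1-m*p)^8*(m*p)^2 + 234816*(m-1)^8*(1-m*p)^9*(m*p) + 20628*(m-1)^8*(1-m*p)^10 + 7296*(m-1)^9*(m*p)^10 + 109696*(m-1)^9*(1-m*p)*(m*p)^9 + 710548*(m-1)^9*(1-m*p)^2*(m*p)^8 + 2548352*(m-1)^9*(1-m*p)^3*(m*p)^7 + 5565868*(m-1)^9*(1-m*p)^4*(m*p)^6 + 7758342*(m-1)^9*(1-m*p)^5*(m*p)^5 + 7035774*(m-1)^9*(1-m*p)^6*(m*p)^4 + 4128264*(m-1)^9*(1-m*p)^7*(m*p)^3 + 1509788*(m-1)^9*(1-m*p)^8*(m*p)^2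 + 312552*(m-1)^9*(1-m*p)^9*(m*p) + 27948*(m-1)^9*(1-m*p)^10 + 9408*(m-1)^10*(m*p)^10 + 132608*(m-1)^10*(1-m*p)*(m*p)^9 + 803548*(m-1)^10*(1-m*p)^2*(m*p)^8 + 2723440*(m-1)^10*(1-m*p)^3*(m*p)^7 + 5707062*(m-1)^10*(1-m*p)^4*(m*p)^6 + 7749064*(m-1)^10*(1-m*p)^5*(m*p)^5 + 6935662*(m-1)^10*(1-m*p)^6*(m*p)^4 + 4059456*(m-1)^10*(1-m*p)^7*(m*p)^3 + 1493440*(m-1)^10*(1-m*p)^8*(m*p)^2 + 313032*(m-1)^10*(1-m*p)^9*(m*p) + 28482*(m-1)^10*(1-m*p)^10 + 8736*(m-1)^11*(m*p)^10 + 116320*(m-1)^11*(1-m*p)*(m*p)^9 + 666300*(m-1)^11*(1-m*p)^2*(m*p)^8 + 2154656*(m-1)^11*(1-m*p)^3*(m*p)^7 + 4361132*(m-1)^11*(1-m*p)^4*(m*p)^6 + 5789834*(m-1)^11*(1-m*p)^5*(m*p)^5 + 5122564*(m-1)^11*(1-m*p)^6*(m*p)^4 + 2991602*(m-1)^11*(1-m*p)^7*(m*p)^3 + 1106690*(m-1)^11*(1-m*p)^8*(m*p)^2 + 234732*(m-1)^11*(1-m*p)^9*(m*p) + 21722*(m-1)^11*(1-m*p)^10 + 5856*(m-1)^12*(m*p)^10 + 73856*(m-1)^12*(1-m*p)*(m*p)^9 + 402388*(m-1)^12*(1-m*p)^2*(m*p)^8 + 1248960*(m-1)^12*(1-m*p)^3*(m*p)^7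 + 2452058*(m-1)^12*(1-m*p)^4*(m*p)^6 + 3190280*(m-1)^12*(1-m*p)^5*(m*p)^5 + 2792394*(m-1)^12*(1-m*p)^6*(m*p)^4 + 1626872*(m-1)^12*(1-m*p)^7*(m*p)^3 + 604782*(m-1)^12*(1-m*p)^8*(m*p)^2 + 129712*(m-1)^12*(1-m*p)^9*(m*p) + 12202*(m-1)^12*(1-m*p)^10 + 2784*(m-1)^13*(m*p)^10 + 33248*(m-1)^13*(1-m*p)*(m*p)^9 + 172812*(m-1)^13*(1-m*p)^2*(m*p)^8 + 516512*(m-1)^13*(1-m*p)^3*(m*p)^7 + 985858*(m-1)^13*(1-m*p)^4*(m*p)^6 + 1258404*(m-1)^13*(1-m*p)^5*(m*p)^5 + 1089782*(m-1)^13*(1-m*p)^6*(m*p)^4 + 633048*(m-1)^13*(1-m*p)^7*(m*p)^3 + 236286*(m-1)^13*(1-m*p)^8*(m*p)^2 + 51204*(m-1)^13*(1-m*p)^9*(m*p) + 4894*(m-1)^13*(1-m*p)^10 + 896*(m-1)^14*(m*p)^10 + 10112*(m-1)^14*(1-m*p)*(m*p)^9 + 50172*(m-1)^14*(1-m*p)^2*(m*p)^8 + 144552*(m-1)^14*(1-m*p)^3*(m*p)^7 + 268400*(m-1)^14*(1-m*p)^4*(m*p)^6 + 336120*(m-1)^14*(1-m*p)^5*(m*p)^5 + 287832*(m-1)^14*(1-m*p)^6*(m*p)^4 + 166552*(m-1)^14*(1-m*p)^7*(m*p)^3 + 62352*(m-1)^14*(1-m*p)^8*(m*p)^2 + 13640*(m-1)^14*(1-m*p)^9*(m*p)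 + 1324*(m-1)^14*(1-m*p)^10 + 176*(m-1)^15*(m*p)^10 + 1872*(m-1)^15*(1-m*p)*(m*p)^9 + 8856*(m-1)^15*(1-m*p)^2*(m*p)^8 + 24576*(m-1)^15*(1-m*p)^3*(m*p)^7 + 44352*(m-1)^15*(1-m*p)^4*(m*p)^6 + 54432*(m-1)^15*(1-m*p)^5*(m*p)^5 + 46032*(m-1)^15*(1-m*p)^6*(m*p)^4 + 26496*(m-1)^15*(1-m*p)^7*(m*p)^3 + 9936*(m-1)^15*(1-m*p)^8*(m*p)^2 + 2192*(m-1)^15*(1-m*p)^9*(m*p) + 216*(m-1)^15*(1-m*p)^10 + 16*(m-1)^16*(m*p)^10 + 160*(m-1)^16*(1-m*p)*(m*p)^9 + 720*(m-1)^16*(1-m*p)^2*(m*p)^8 + 1920*(m-1)^16*(1-m*p)^3*(m*p)^7 + 3360*(m-1)^16*(1-m*p)^4*(m*p)^6 + 4032*(m-1)^16*(1-m*p)^5*(m*p)^5 + 3360*(m-1)^16*(1-m*p)^6*(m*p)^4 + 1920*(m-1)^16*(1-m*p)^7*(m*p)^3 + 720*(m-1)^16*(1-m*p)^8*(m*p)^2 + 160*(m-1)^16*(1-m*p)^9*(m*p) + 16*(m-1)^16*(1-m*p)^10)"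
    unfolding WHr_def by algebra
  have "0 < p^16*(128*(m-1)^2*(1-m*p)^4*(m*p)^6 + 384*(m-1)^2*(1-m*p)^5*(m*p)^5 + 480*(m-1)^2*(1-m*p)^6*(m*p)^4 + 320*(m-1)^2*(1-m*p)^7*(m*p)^3 + 120*(m-1)^2*(1-m*p)^8*(m*p)^2 + 24*(m-1)^2*(1-m*p)^9*(m*p) + 2*(m-1)^2*(1-m*p)^10 + 32*(m-1)^3*(1-m*p)^2*(m*p)^8 + 608*(m-1)^3*(1-m*p)^3*(m*p)^7 + 3600*(m-1)^3*(1-m*p)^4*(m*p)^6 + 8000*(m-1)^3*(1-m*p)^5*(m*p)^5 + 8994*(m-1)^3*(1-m*p)^6*(m*p)^4 + 5714*(m-1)^3*(1-m*p)^7*(m*p)^3 + 2090*(m-1)^3*(1-m*p)^8*(m*p)^2 + 412*(m-1)^3*(1-m*p)^9*(m*p) + 34*(m-1)^3*(1-m*p)^10 + 64*(m-1)^4*(1-m*p)*(m*p)^9 + 1216*(m-1)^4*(1-m*p)^2*(m*p)^8 + 10080*(m-1)^4*(1-m*p)^3*(m*p)^7 + 38368*(m-1)^4*(1-m*p)^4*(m*p)^6 + 72292*(m-1)^4*(1-m*p)^5*(m*p)^5 + 75732*(m-1)^4*(1-m*p)^6*(m*p)^4 + 46632*(m-1)^4*(1-m*p)^7*(m*p)^3 + 16846*(m-1)^4*(1-m*p)^8*(m*p)^2 + 3312*(m-1)^4*(1-m*p)^9*(m*p) + 274*(m-1)^4*(1-m*p)^10 + 32*(m-1)^5*(m*p)^10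 + 1056*(m-1)^5*(1-m*p)*(m*p)^9 + 12432*(m-1)^5*(1-m*p)^2*(m*p)^8 + 73184*(m-1)^5*(1-m*p)^3*(m*p)^7 + 224810*(m-1)^5*(1-m*p)^4*(m*p)^6 + 381542*(m-1)^5*(1-m*p)^5*(m*p)^5 + 380740*(m-1)^5*(1-m*p)^6*(m*p)^4 + 229840*(m-1)^5*(1-m*p)^7*(m*p)^3 + 82694*(m-1)^5*(1-m*p)^8*(m*p)^2 + 16340*(m-1)^5*(1-m*p)^9*(m*p) + 1366*(m-1)^5*(1-m*p)^10 + 320*(m-1)^6*(m*p)^10 + 7040*(m-1)^6*(1-m*p)*(m*p)^9 + 64760*(m-1)^6*(1-m*p)^2*(m*p)^8 + 312616*(m-1)^6*(1-m*p)^3*(m*p)^7 + 841562*(m-1)^6*(1-m*p)^4*(m*p)^6 + 1328952*(m-1)^6*(1-m*p)^5*(m*p)^5 + 1280994*(m-1)^6*(1-m*p)^6*(m*p)^4 + 763752*(m-1)^6*(1-m*p)^7*(m*p)^3 + 275080*(m-1)^6*(1-m*p)^8*(m*p)^2 + 54872*(m-1)^6*(1-m*p)^9*(m*p) + 4656*(m-1)^6*(1-m*p)^10 + 1456*(m-1)^7*(m*p)^10 + 26576*(m-1)^7*(1-m*p)*(m*p)^9 + 208988*(m-1)^7*(1-m*p)^2*(m*p)^8 + 884480*(m-1)^7*(1-m*p)^3*(m*p)^7 + 2174316*(m-1)^7*(1-m*p)^4*(m*p)^6 + 3257414*(m-1)^7*(1-m*p)^5*(m*p)^5 + 3060434*(m-1)^7*(1-m*p)^6*(m*p)^4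 + 1810572*(m-1)^7*(1-m*p)^7*(m*p)^3 + 654692*(m-1)^7*(1-m*p)^8*(m*p)^2 + 132136*(m-1)^7*(1-m*p)^9*(m*p) + 11404*(m-1)^7*(1-m*p)^10 + 3984*(m-1)^8*(m*p)^10 + 64928*(m-1)^8*(1-m*p)*(m*p)^9 + 457164*(m-1)^8*(1-m*p)^2*(m*p)^8 + 1760800*(m-1)^8*(1-m*p)^3*(m*p)^7 + 4048998*(m-1)^8*(1-m*p)^4*(m*p)^6 + 5826844*(m-1)^8*(1-m*p)^5*(m*p)^5 + 5367866*(m-1)^8*(1-m*p)^6*(m*p)^4 + 3160032*(m-1)^8*(1-m*p)^7*(m*p)^3 + 1148836*(m-1)^8*(1-m*p)^8*(m*p)^2 + 234816*(m-1)^8*(1-m*p)^9*(m*p) + 20628*(m-1)^8*(1-m*p)^10 + 7296*(m-1)^9*(m*p)^10 + 109696*(m-1)^9*(1-m*p)*(m*p)^9 + 710548*(m-1)^9*(1-m*p)^2*(m*p)^8 + 2548352*(m-1)^9*(1-m*p)^3*(m*p)^7 + 5565868*(m-1)^9*(1-m*p)^4*(m*p)^6 + 7758342*(m-1)^9*(1-m*p)^5*(m*p)^5 + 7035774*(m-1)^9*(1-m*p)^6*(m*p)^4 + 4128264*(m-1)^9*(1-m*p)^7*(m*p)^3 + 1509788*(m-1)^9*(1-m*p)^8*(m*p)^2 + 312552*(m-1)^9*(1-m*p)^9*(m*p) + 27948*(m-1)^9*(1-m*p)^10 + 9408*(m-1)^10*(m*p)^10 + 132608*(m-1)^10*(1-m*p)*(m*p)^9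 + 803548*(m-1)^10*(1-m*p)^2*(m*p)^8 + 2723440*(m-1)^10*(1-m*p)^3*(m*p)^7 + 5707062*(m-1)^10*(1-m*p)^4*(m*p)^6 + 7749064*(m-1)^10*(1-m*p)^5*(m*p)^5 + 6935662*(m-1)^10*(1-m*p)^6*(m*p)^4 + 4059456*(m-1)^10*(1-m*p)^7*(m*p)^3 + 1493440*(m-1)^10*(1-m*p)^8*(m*p)^2 + 313032*(m-1)^10*(1-m*p)^9*(m*p) + 28482*(m-1)^10*(1-m*p)^10 + 8736*(m-1)^11*(m*p)^10 + 116320*(m-1)^11*(1-m*p)*(m*p)^9 + 666300*(m-1)^11*(1-m*p)^2*(m*p)^8 + 2154656*(m-1)^11*(1-m*p)^3*(m*p)^7 + 4361132*(m-1)^11*(1-m*p)^4*(m*p)^6 + 5789834*(m-1)^11*(1-m*p)^5*(m*p)^5 + 5122564*(m-1)^11*(1-m*p)^6*(m*p)^4 + 2991602*(m-1)^11*(1-m*p)^7*(m*p)^3 + 1106690*(m-1)^11*(1-m*p)^8*(m*p)^2 + 234732*(m-1)^11*(1-m*p)^9*(m*p) + 21722*(m-1)^11*(1-m*p)^10 + 5856*(m-1)^12*(m*p)^10 + 73856*(m-1)^12*(1-m*p)*(m*p)^9 + 402388*(m-1)^12*(1-m*p)^2*(m*p)^8 + 1248960*(m-1)^12*(1-m*p)^3*(m*p)^7 + 2452058*(m-1)^12*(1-m*p)^4*(m*p)^6 + 3190280*(m-1)^12*(1-m*p)^5*(m*p)^5 + 2792394*(m-1)^12*(1-m*p)^6*(m*p)^4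 + 1626872*(m-1)^12*(1-m*p)^7*(m*p)^3 + 604782*(m-1)^12*(1-m*p)^8*(m*p)^2 + 129712*(m-1)^12*(1-m*p)^9*(m*p) + 12202*(m-1)^12*(1-m*p)^10 + 2784*(m-1)^13*(m*p)^10 + 33248*(m-1)^13*(1-m*p)*(m*p)^9 + 172812*(m-1)^13*(1-m*p)^2*(m*p)^8 + 516512*(m-1)^13*(1-m*p)^3*(m*p)^7 + 985858*(m-1)^13*(1-m*p)^4*(m*p)^6 + 1258404*(m-1)^13*(1-m*p)^5*(m*p)^5 + 1089782*(m-1)^13*(1-m*p)^6*(m*p)^4 + 633048*(m-1)^13*(1-m*p)^7*(m*p)^3 + 236286*(m-1)^13*(1-m*p)^8*(m*p)^2 + 51204*(m-1)^13*(1-m*p)^9*(m*p) + 4894*(m-1)^13*(1-m*p)^10 + 896*(m-1)^14*(m*p)^10 + 10112*(m-1)^14*(1-m*p)*(m*p)^9 + 50172*(m-1)^14*(1-m*p)^2*(m*p)^8 + 144552*(m-1)^14*(1-m*p)^3*(m*p)^7 + 268400*(m-1)^14*(1-m*p)^4*(m*p)^6 + 336120*(m-1)^14*(1-m*p)^5*(m*p)^5 + 287832*(m-1)^14*(1-m*p)^6*(m*p)^4 + 166552*(m-1)^14*(1-m*p)^7*(m*p)^3 + 62352*(m-1)^14*(1-m*p)^8*(m*p)^2 + 13640*(m-1)^14*(1-m*p)^9*(m*p) + 1324*(m-1)^14*(1-m*p)^10 + 176*(m-1)^15*(m*p)^10 + 1872*(m-1)^15*(1-m*p)*(m*p)^9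 + 8856*(m-1)^15*(1-m*p)^2*(m*p)^8 + 24576*(m-1)^15*(1-m*p)^3*(m*p)^7 + 44352*(m-1)^15*(1-m*p)^4*(m*p)^6 + 54432*(m-1)^15*(1-m*p)^5*(m*p)^5 + 46032*(m-1)^15*(1-m*p)^6*(m*p)^4 + 26496*(m-1)^15*(1-m*p)^7*(m*p)^3 + 9936*(m-1)^15*(1-m*p)^8*(m*p)^2 + 2192*(m-1)^15*(1-m*p)^9*(m*p) + 216*(m-1)^15*(1-m*p)^10 + 16*(m-1)^16*(m*p)^10 + 160*(m-1)^16*(1-m*p)*(m*p)^9 + 720*(m-1)^16*(1-m*p)^2*(m*p)^8 + 1920*(m-1)^16*(1-m*p)^3*(m*p)^7 + 3360*(m-1)^16*(1-m*p)^4*(m*p)^6 + 4032*(m-1)^16*(1-m*p)^5*(m*p)^5 + 3360*(m-1)^16*(1-m*p)^6*(m*p)^4 + 1920*(m-1)^16*(1-m*p)^7*(m*p)^3 + 720*(m-1)^16*(1-m*p)^8*(m*p)^2 + 160*(m-1)^16*(1-m*p)^9*(m*p) + 16*(m-1)^16*(1-m*p)^10)"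
    using assms b by (intro add_pos_pos mult_pos_pos zero_less_power; simp)
  then have "0 < WHr m p * (m*p)^10" using id by simp
  moreover have "0 < (m*p)^10" using b(3) by (rule zero_less_power)
  ultimately show ?thesis by (rule zero_less_mult_pos2)
qed

lemma Cp_pos:
  assumes "0 < p" "p < 1" "p < z" "z < 1"
  shows "0 < Cp p z"
proof -
  have b: "0 < 1 - p" "0 < z - p" "0 < 1 - z" using assms by auto
  have id: "Cp p z * ((1-p)^3) = 4*(1-p)*p^6*(1-z)^3 + 12*(1-p)*p^6*(z-p)*(1-z)^2 + 12*(1-p)*p^6*(z-p)^2*(1-z) + 4*(1-p)*p^6*(z-p)^3 + 12*(1-p)^2*p^5*(1-z)^3 + 50*(1-p)^2*p^5*(z-p)*(1-z)^2 + 58*(1-p)^2*p^5*(z-p)^2*(1-z) + 20*(1-p)^2*p^5*(z-p)^3 + 13*(1-p)^3*p^4*(1-z)^3 + 80*(1-p)^3*p^4*(z-p)*(1-z)^2 + 112*(1-p)^3*p^4*(z-p)^2*(1-z) + 42*(1-p)^3*p^4*(z-p)^3 + 6*(1-p)^4*p^3*(1-z)^3 + 61*(1-p)^4*p^3*(z-p)*(1-z)^2 + 111*(1-p)^4*p^3*(z-p)^2*(1-z) + 48*(1-p)^4*p^3*(z-p)^3 + (1-p)^5*p^2*(1-z)^3 + 22*(1-p)^5*p^2*(z-p)*(1-z)^2 + 60*(1-p)^5*p^2*(z-p)^2*(1-z) + 32*(1-p)^5*p^2*(z-p)^3 + 3*(1-p)^6*p*(z-p)*(1-z)^2 + 17*(1-p)^6*p*(z-p)^2*(1-z)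 + 12*(1-p)^6*p*(z-p)^3 + 2*(1-p)^7*(z-p)^2*(1-z) + 2*(1-p)^7*(z-p)^3"
    unfolding Cp_def by algebra
  have "0 < 4*(1-p)*p^6*(1-z)^3 + 12*(1-p)*p^6*(z-p)*(1-z)^2 + 12*(1-p)*p^6*(z-p)^2*(1-z) + 4*(1-p)*p^6*(z-p)^3 + 12*(1-p)^2*p^5*(1-z)^3 + 50*(1-p)^2*p^5*(z-p)*(1-z)^2 + 58*(1-p)^2*p^5*(z-p)^2*(1-z) + 20*(1-p)^2*p^5*(z-p)^3 + 13*(1-p)^3*p^4*(1-z)^3 + 80*(1-p)^3*p^4*(z-p)*(1-z)^2 + 112*(1-p)^3*p^4*(z-p)^2*(1-z) + 42*(1-p)^3*p^4*(z-p)^3 + 6*(1-p)^4*p^3*(1-z)^3 + 61*(1-p)^4*p^3*(z-p)*(1-z)^2 + 111*(1-p)^4*p^3*(z-p)^2*(1-z) + 48*(1-p)^4*p^3*(z-p)^3 + (1-p)^5*p^2*(1-z)^3 + 22*(1-p)^5*p^2*(z-p)*(1-z)^2 + 60*(1-p)^5*p^2*(z-p)^2*(1-z) + 32*(1-p)^5*p^2*(z-p)^3 + 3*(1-p)^6*p*(z-p)*(1-z)^2 + 17*(1-p)^6*p*(z-p)^2*(1-z) + 12*(1-p)^6*p*(z-p)^3 + 2*(1-p)^7*(z-p)^2*(1-z) + 2*(1-p)^7*(z-p)^3"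
    using assms b by (intro add_pos_pos mult_pos_pos zero_less_power; simp)
  then have "0 < Cp p z * ((1-p)^3)" using id by simp
  moreover have "0 < (1-p)^3" using assms b by (intro mult_pos_pos zero_less_power; simp)
  ultimately show ?thesis by (rule zero_less_mult_pos2)
qed

lemma Dp_pos:
  assumes "0 < p" "p < 1" "p < z" "z < 1"
  shows "0 < Dp p z"
proof -
  have b: "0 < 1 - p" "0 < z - p" "0 < 1 - z" using assms by auto
  have id: "Dp p z * ((1-p)^2) = 2*(1-p)*p^3*(1-z)^2 + 4*(1-p)*p^3*(z-p)*(1-z) + 2*(1-p)*p^3*(z-p)^2 + (1-p)^2*p^2*(1-z)^2 + 9*(1-p)^2*p^2*(z-p)*(1-z) + 6*(1-p)^2*p^2*(z-p)^2 + 7*(1-p)^3*p*(z-p)*(1-z) + 6*(1-p)^3*p*(z-p)^2 + 2*(1-p)^4*(z-p)*(1-z) + 2*(1-p)^4*(z-p)^2"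
    unfolding Dp_def by algebra
  have "0 < 2*(1-p)*p^3*(1-z)^2 + 4*(1-p)*p^3*(z-p)*(1-z) + 2*(1-p)*p^3*(z-p)^2 + (1-p)^2*p^2*(1-z)^2 + 9*(1-p)^2*p^2*(z-p)*(1-z) + 6*(1-p)^2*p^2*(z-p)^2 + 7*(1-p)^3*p*(z-p)*(1-z) + 6*(1-p)^3*p*(z-p)^2 + 2*(1-p)^4*(z-p)*(1-z) + 2*(1-p)^4*(z-p)^2"
    using assms b by (intro add_pos_pos mult_pos_pos zero_less_power; simp)
  then have "0 < Dp p z * ((1-p)^2)" using id by simp
  moreover have "0 < (1-p)^2" using assms b by (intro mult_pos_pos zero_less_power; simp)
  ultimately show ?thesis by (rule zero_less_mult_pos2)
qed

definition Hn :: "real \<Rightarrow> real \<Rightarrow> real" where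
  "Hn p z = p*(1+z)*Ap p z*Bp p z"
definition Hd :: "real \<Rightarrow> real \<Rightarrow> real" where
  "Hd p z = Cp p z * Dp p z"
definition Hf :: "real \<Rightarrow> real \<Rightarrow> real" where
  "Hf p z = Hn p z / Hd p z"

lemma Rn_deriv: "((\<lambda>z. Rn p z) has_real_derivative RnZ p z) (at z)"
  unfolding Rn_def RnZ_def
  apply (rule DERIV_cong, (rule derivative_intros)+)
  apply (simp; algebra)
  done

lemma Rd_deriv: "((\<lambda>z. Rd p z) has_real_derivative RdZ p z) (at z)"
  unfolding Rd_def RdZ_def
  apply (rule DERIV_cong, (rule derivative_intros)+)
  apply (simp; algebra)
  done

lemma Hn_deriv: "((\<lambda>z. Hn p z) has_real_derivative HnZ p z) (at z)"
  unfolding Hn_def HnZ_def Ap_def Bp_def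
  apply (rule DERIV_cong, (rule derivative_intros)+)
  apply (simp; algebra)
  done

lemma Hd_deriv: "((\<lambda>z. Hd p z) has_real_derivative HdZ p z) (at z)"
  unfolding Hd_def HdZ_def Cp_def Dp_def
  apply (rule DERIV_cong, (rule derivative_intros)+)
  apply (simp; algebra)
  done

lemma rn_deriv: "((\<lambda>p. rn m p) has_real_derivative rnP m p) (at p)"
  unfolding rn_def rnP_def
  apply (rule DERIV_cong, (rule derivative_intros)+)
  apply (simp; algebra)
  done

lemma rd_deriv: "((\<lambda>p. rd m p) has_real_derivative rdP m p) (at p)"
  unfolding rd_def rdP_def
  apply (rule DERIV_cong, (rule derivative_intros)+)
  apply (simp; algebra)
  done

lemma hn_deriv: "((\<lambda>p. hn m p) has_real_derivative hnP m p) (at p)"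
  unfolding hn_def hnP_def
  apply (rule DERIV_cong, (rule derivative_intros)+)
  apply (simp; algebra)
  done

lemma hdr_deriv: "((\<lambda>p. hdr m p) has_real_derivative hdP m p) (at p)"
  unfolding hdr_def hdP_def
  apply (rule DERIV_cong, (rule derivative_intros)+)
  apply (simp; algebra)
  done

lemma rn_eq: "Rn p (m*p) = rn m p" unfolding Rn_def rn_def by algebra
lemma rd_eq: "Rd p (m*p) = rd m p" unfolding Rd_def rd_def by algebra
lemma hn_eq: "Hn p (m*p) = hn m p" unfolding Hn_def Ap_def Bp_def hn_def by algebra
lemma hdr_eq: "Hd p (m*p) = hdr m p" unfolding Hd_def Cp_def Dp_def hdr_def by algebra

lemma WR_eq: "RnZ p z * Rd p z - Rn p z * RdZ p z = WR p z"
  unfolding RnZ_def Rd_def Rn_def RdZ_def WR_def by algebra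
lemma WH_eq: "HnZ p z * Hd p z - Hn p z * HdZ p z = - WH p z"
  unfolding HnZ_def Hd_def Hn_def HdZ_def WH_def Ap_def Bp_def Cp_def Dp_def by algebra
lemma WRr_eq: "rnP m p * rd m p - rn m p * rdP m p = WRr m p"
  unfolding rnP_def rd_def rn_def rdP_def WRr_def by algebra
lemma WHr_eq: "hnP m p * hdr m p - hn m p * hdP m p = WHr m p"
  unfolding hnP_def hdr_def hn_def hdP_def WHr_def by algebra



lemma quot_incr:
  fixes n d n' d' :: "real \<Rightarrow> real" and a b :: real
  assumes ab: "a < b"
    and dn: "\<And>x. (n has_real_derivative n' x) (at x)"
    and dd: "\<And>x. (d has_real_derivative d' x) (at x)"
    and nz: "\<And>x. a \<le> x \<Longrightarrow> x \<le> b \<Longrightarrow> d x \<noteq> 0"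
    and pos: "\<And>x. a < x \<Longrightarrow> x < b \<Longrightarrow> 0 < n' x * d x - n x * d' x"
  shows "n a / d a < n b / d b"
proof -
  have "(\<lambda>x. n x / d x) a < (\<lambda>x. n x / d x) b"
  proof (rule DERIV_pos_imp_increasing_open[OF ab])
    fix x assume x: "a < x" "x < b"
    then have "d x \<noteq> 0" using nz by auto
    have "((\<lambda>x. n x / d x) has_real_derivative (n' x * d x - n x * d' x) / (d x * d x)) (at x)"
      by (rule DERIV_divide[OF dn dd \<open>d x \<noteq> 0\<close>])
    moreover have "0 < (n' x * d x - n x * d' x) / (d x * d x)"
    proof (rule divide_pos_pos)
      show "0 < n' x * d x - n x * d' x" by (rule pos[OF x])
      have "0 < (d x)^2" using \<open>d x \<noteq> 0\<close> by simp
      then show "0 < d x * d x" by (simp add: power2_eq_square)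
    qed
    ultimately show "\<exists>y. ((\<lambda>x. n x / d x) has_real_derivative y) (at x) \<and> 0 < y" by blast
  next
    have cn: "continuous_on {a..b} n"
      using dn by (meson DERIV_isCont continuous_at_imp_continuous_on)
    have cd: "continuous_on {a..b} d"
      using dd by (meson DERIV_isCont continuous_at_imp_continuous_on)
    show "continuous_on {a..b} (\<lambda>x. n x / d x)"
      using cn cd nz by (intro continuous_on_divide) auto
  qed
  then show ?thesis by simp
qed

lemma Rd_pos:
  assumes "0 < p" "p \<le> z" "p * z < 1"
  shows "0 < Rd p z"
proof -
  have "2*z - p - p*z^2 = (z - p) + z*(1 - p*z)" by algebra
  moreover have "0 < z*(1 - p*z)" using assms by (intro mult_pos_pos) auto
  ultimately have "0 < 2*z - p - p*z^2" using assms by linarith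
  moreover have "0 < 1 + z" using assms by linarith
  ultimately show ?thesis unfolding Rd_def by simp
qed

lemma pz_lt1:
  fixes p z :: real
  assumes "0 < p" "p < 1" "p \<le> z" "z \<le> 1"
  shows "p * z < 1"
proof -
  have "p * z \<le> p" using assms by (intro mult_left_le) auto
  then show ?thesis using assms by linarith
qed

lemma Cp_cpos:
  assumes "0 < p" "p < 1" "p \<le> z" "z \<le> 1"
  shows "0 < Cp p z"
proof (cases "z = p")
  case True
  have "Cp p z = p^2*(1+p)*((1-p)*(1+p))" unfolding Cp_def True by algebra
  moreover have "0 < p^2*(1+p)*((1-p)*(1+p))" using assms by (intro mult_pos_pos) auto
  ultimately show ?thesis by simp
next
  case False
  show ?thesis
  proof (cases "z = 1")
    case True
    have "Cp p z = 2*(1-p)*(1+p^2)" unfolding Cp_def True by (simp add: algebra_simps power2_eq_square power3_eq_cube)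
    moreover have "0 < 2*(1-p)*(1+p^2)" using assms by (intro mult_pos_pos) (auto simp: add_pos_nonneg)
    ultimately show ?thesis by simp
  next
    case False
    then show ?thesis using \<open>z \<noteq> p\<close> assms by (intro Cp_pos) auto
  qed
qed

lemma Dp_cpos:
  assumes "0 < p" "p < 1" "p \<le> z" "z \<le> 1"
  shows "0 < Dp p z"
proof (cases "z = p")
  case True
  have "Dp p z = p^2*((1-p)*(1+p))" unfolding Dp_def True by algebra
  moreover have "0 < p^2*((1-p)*(1+p))" using assms by (intro mult_pos_pos) auto
  ultimately show ?thesis by simp
next
  case False
  show ?thesis
  proof (cases "z = 1")
    case True
    have "Dp p z = 2*(1-p)" unfolding Dp_def True by (simp add: algebra_simps)
    then show ?thesis using assms by simp
  next
    case False
    then show ?thesis using \<open>z \<noteq> p\<close> assms by (intro Dp_pos) auto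
  qed
qed

lemma Hd_cpos:
  assumes "0 < p" "p < 1" "p \<le> z" "z \<le> 1"
  shows "0 < Hd p z"
  unfolding Hd_def using Cp_cpos[OF assms] Dp_cpos[OF assms] by simp

lemma R_mono:
  assumes "0 < p" "p < 1" "p \<le> z1" "z1 < z2" "z2 \<le> 1"
  shows "Rf p z1 < Rf p z2"
  unfolding Rf_def
proof (rule quot_incr[OF assms(4) Rn_deriv Rd_deriv])
  fix x assume "z1 \<le> x" "x \<le> z2"
  then show "Rd p x \<noteq> 0" using assms Rd_pos[of p x] pz_lt1[of p x] by force
next
  fix x assume "z1 < x" "x < z2"
  then show "0 < RnZ p x * Rd p x - Rn p x * RdZ p x"
    unfolding WR_eq using assms by (intro WR_pos) auto
qed

lemma H_anti:
  assumes "0 < p" "p < 1" "p \<le> z1" "z1 < z2" "z2 \<le> 1"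
  shows "Hf p z2 < Hf p z1"
proof -
  have "(- Hn p z1) / Hd p z1 < (- Hn p z2) / Hd p z2"
  proof (rule quot_incr[OF assms(4)])
    show "\<And>x. ((\<lambda>z. - Hn p z) has_real_derivative - HnZ p x) (at x)"
      by (rule derivative_intros Hn_deriv)+
    show "\<And>x. ((\<lambda>z. Hd p z) has_real_derivative HdZ p x) (at x)" by (rule Hd_deriv)
  next
    fix x assume "z1 \<le> x" "x \<le> z2"
    then show "Hd p x \<noteq> 0" using assms Hd_cpos[of p x] by force
  next
    fix x assume "z1 < x" "x < z2"
    then have "0 < WH p x" using assms by (intro WH_pos) auto
    then show "0 < - HnZ p x * Hd p x - - Hn p x * HdZ p x"
      using WH_eq[of p x] by (simp add: algebra_simps)
  qed
  then show ?thesis unfolding Hf_def by simp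
qed



lemma R_ray:
  assumes "1 < m" "0 < p1" "p1 < p2" "m * p2 \<le> 1"
  shows "Rf p1 (m*p1) < Rf p2 (m*p2)"
proof -
  have "rn m p1 / rd m p1 < rn m p2 / rd m p2"
  proof (rule quot_incr[OF assms(3) rn_deriv rd_deriv])
    fix x assume x: "p1 \<le> x" "x \<le> p2"
    have "m * x \<le> m * p2" using x assms by simp
    then have mx: "m * x \<le> 1" using assms by linarith
    have "x * 1 < x * m" using x assms by (intro mult_strict_left_mono) auto
    then have x1: "x < 1" using mx by (simp add: mult.commute)
    have "x \<le> m * x" using \<open>x * 1 < x * m\<close> by (simp add: mult.commute)
    then have "0 < Rd x (m*x)" using assms x mx x1
      by (intro Rd_pos pz_lt1) auto
    then show "rd m x \<noteq> 0" by (simp add: rd_eq)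
  next
    fix x assume x: "p1 < x" "x < p2"
    have "m * x < m * p2" using x assms by simp
    then have "m * x < 1" using assms by linarith
    then show "0 < rnP m x * rd m x - rn m x * rdP m x"
      unfolding WRr_eq using assms x by (intro WRr_pos) auto
  qed
  then show ?thesis unfolding Rf_def rn_eq rd_eq .
qed

lemma H_ray:
  assumes "1 < m" "0 < p1" "p1 < p2" "m * p2 \<le> 1"
  shows "Hf p1 (m*p1) < Hf p2 (m*p2)"
proof -
  have "hn m p1 / hdr m p1 < hn m p2 / hdr m p2"
  proof (rule quot_incr[OF assms(3) hn_deriv hdr_deriv])
    fix x assume x: "p1 \<le> x" "x \<le> p2"
    have "m * x \<le> m * p2" using x assms by simp
    then have mx: "m * x \<le> 1" using assms by linarith
    have "x * 1 < x * m" using x assms by (intro mult_strict_left_mono) auto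
    then have x1: "x < 1" using mx by (simp add: mult.commute)
    have "x \<le> m * x" using \<open>x * 1 < x * m\<close> by (simp add: mult.commute)
    then have "0 < Hd x (m*x)" using assms x mx x1
      by (intro Hd_cpos) auto
    then show "hdr m x \<noteq> 0" by (simp add: hdr_eq)
  next
    fix x assume x: "p1 < x" "x < p2"
    have "m * x < m * p2" using x assms by simp
    then have "m * x < 1" using assms by linarith
    then show "0 < hnP m x * hdr m x - hn m x * hdP m x"
      unfolding WHr_eq using assms x by (intro WHr_pos) auto
  qed
  then show ?thesis unfolding Hf_def hn_eq hdr_eq .
qed

lemma Rf_pp: "Rf p p = 0" unfolding Rf_def Rn_def by simp

lemma Rf_p1: assumes "p < 1" shows "Rf p 1 = 1/2"
proof -
  have "Rn p 1 = 2*(1-p)" "Rd p 1 = 4*(1-p)" unfolding Rn_def Rd_def by (simp_all add: algebra_simps)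
  then show ?thesis unfolding Rf_def using assms by simp
qed

lemma Hf_pp: assumes "0 < p" "p < 1" shows "Hf p p = 1"
proof -
  have "Hn p p = Hd p p" unfolding Hn_def Hd_def Ap_def Bp_def Cp_def Dp_def by algebra
  moreover have "0 < Hd p p" using assms by (intro Hd_cpos) auto
  ultimately show ?thesis unfolding Hf_def by simp
qed

lemma Rf_gt_half:
  assumes "0 < p" "p < 1" "1 < z" "p * z < 1"
  shows "1/2 < Rf p z"
proof -
  have Rdp: "0 < Rd p z" using assms by (intro Rd_pos) auto
  have e: "2 * Rn p z - Rd p z = (z - 1) * ((z - p) + z*(1-p*z) + 2*p*z + 2*p^2*z)"
    unfolding Rn_def Rd_def by algebra
  have "0 < z*(1-p*z)" using assms by (intro mult_pos_pos) auto
  moreover have "0 < p*z" "0 < p^2*z" using assms by auto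
  ultimately have "0 < (z - p) + z*(1-p*z) + 2*p*z + 2*p^2*z" using assms by linarith
  then have "0 < 2 * Rn p z - Rd p z" unfolding e using assms by (intro mult_pos_pos) auto
  then show ?thesis unfolding Rf_def using Rdp by (simp add: field_simps)
qed

lemma link_eq:
  assumes p: "0 < p" "p < 1" and a: "0 < a" "a < 1"
  shows "bpam_eq r p a \<longleftrightarrow> r = Rf p ((a + p - a*p) / (a*p + 1 - a))"
    and "p < (a + p - a*p) / (a*p + 1 - a)"
    and "p * ((a + p - a*p) / (a*p + 1 - a)) < 1"
proof -
  define uu where "uu = a + p - a*p"
  define vv where "vv = a*p + 1 - a"
  have "0 < p*(1-a)" using p a by (intro mult_pos_pos) auto
  then have uu: "0 < uu" unfolding uu_def using a by (simp add: algebra_simps)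
  have "0 < a*p" using p a by simp
  then have vv: "0 < vv" unfolding vv_def using a by simp
  have "uu - p* vv = a*((1-p)*(1+p))" unfolding uu_def vv_def by algebra
  moreover have "0 < a*((1-p)*(1+p))" using p a by (intro mult_pos_pos) auto
  ultimately have zp: "p * vv < uu" by linarith
  have "vv - p*uu = (1-a)*((1-p)*(1+p))" unfolding uu_def vv_def by algebra
  moreover have "0 < (1-a)*((1-p)*(1+p))" using p a by (intro mult_pos_pos) auto
  ultimately have z1: "p * uu < vv" by linarith
  define z where "z = uu / vv"
  have uz: "uu = z * vv" unfolding z_def using vv by simp
  show pz: "p < (a + p - a*p) / (a*p + 1 - a)"
    using zp vv unfolding uu_def[symmetric] vv_def[symmetric] by (simp add: field_simps)
  show pz1: "p * ((a + p - a*p) / (a*p + 1 - a)) < 1"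
    using z1 vv unfolding uu_def[symmetric] vv_def[symmetric] by (simp add: field_simps)
  have Rdp: "0 < Rd p z" using pz pz1 p unfolding z_def uu_def vv_def by (intro Rd_pos) auto
  have e1: "bpam_eq r p a \<longleftrightarrow> 2*a*uu* vv - r*uu* vv - r*a* vv - a*p*(1-r)*uu = 0"
    unfolding bpam_eq_def uu_def[symmetric] vv_def[symmetric] using uu vv
    by (simp add: field_simps; algebra)
  have e2: "r = Rf p z \<longleftrightarrow> r * Rd p z - Rn p z = 0"
    unfolding Rf_def using Rdp by (simp add: field_simps)
  have i1: "Rd p z * vv^3 = (vv+uu)*(2*uu* vv - p* vv^2 - p*uu^2)" unfolding uz Rd_def by algebra
  have i2: "Rn p z * vv^3 = uu*(uu-p* vv)*(2* vv+p* vv-p*uu)" unfolding uz Rn_def by algebra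
  have i3: "r*((vv+uu)*(2*uu* vv - p* vv^2 - p*uu^2)) - uu*(uu-p* vv)*(2* vv+p* vv-p*uu)
      = - ((1+p)*((1-p)*(1+p))) * (2*a*uu* vv - r*uu* vv - r*a* vv - a*p*(1-r)*uu)"
    unfolding uu_def vv_def by algebra
  have "(r * Rd p z - Rn p z) * vv^3 = r*(Rd p z * vv^3) - Rn p z * vv^3" by algebra
  also have "\<dots> = r*((vv+uu)*(2*uu* vv - p* vv^2 - p*uu^2)) - uu*(uu-p* vv)*(2* vv+p* vv-p*uu)"
    unfolding i1 i2 ..
  also have "\<dots> = - ((1+p)*((1-p)*(1+p))) * (2*a*uu* vv - r*uu* vv - r*a* vv - a*p*(1-r)*uu)"
    by (rule i3)
  finally have "(r * Rd p z - Rn p z) * vv^3 = - ((1+p)*((1-p)*(1+p))) * (2*a*uu* vv - r*uu* vv - r*a* vv - a*p*(1-r)*uu)" .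
  moreover have "0 < (1+p)*((1-p)*(1+p))" using p by (intro mult_pos_pos) auto
  ultimately have "r * Rd p z - Rn p z = 0 \<longleftrightarrow> 2*a*uu* vv - r*uu* vv - r*a* vv - a*p*(1-r)*uu = 0"
    using vv by (metis mult_eq_0_iff neg_equal_0_iff_equal power_not_zero less_irrefl)
  then show "bpam_eq r p a \<longleftrightarrow> r = Rf p ((a + p - a*p) / (a*p + 1 - a))"
    using e1 e2 unfolding z_def uu_def vv_def by simp
qed


lemma Rf_cont: assumes "0 < p" "p < 1" shows "continuous_on {p..1} (Rf p)"
proof -
  have cn: "continuous_on {p..1} (\<lambda>z. Rn p z)"
    using Rn_deriv by (meson DERIV_isCont continuous_at_imp_continuous_on)
  have cd: "continuous_on {p..1} (\<lambda>z. Rd p z)"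
    using Rd_deriv by (meson DERIV_isCont continuous_at_imp_continuous_on)
  have nz: "\<forall>z\<in>{p..1}. Rd p z \<noteq> 0"
    using assms Rd_pos pz_lt1 by (metis atLeastAtMost_iff less_irrefl)
  have "continuous_on {p..1} (\<lambda>z. Rn p z / Rd p z)"
    using cn cd nz by (intro continuous_on_divide) auto
  then show ?thesis unfolding Rf_def[abs_def] by simp
qed

lemma alpha_props:
  assumes p: "0 < p" "p < 1" and r: "0 < r" "r \<le> 1/2"
  shows "0 < bpam_alpha r p \<and> bpam_alpha r p < 1 \<and> bpam_eq r p (bpam_alpha r p)"
proof -
  let ?Z = "\<lambda>b. (b + p - b*p) / (b*p + 1 - b)"
  have zle: "?Z b \<le> 1" if b: "0 < b" "b < 1" "bpam_eq r p b" for b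
  proof (rule ccontr)
    assume "\<not> ?Z b \<le> 1"
    then have "1/2 < Rf p (?Z b)" using link_eq(3)[OF p b(1,2)] p by (intro Rf_gt_half) auto
    moreover have "r = Rf p (?Z b)" using link_eq(1)[OF p b(1,2)] b(3) by simp
    ultimately show False using r by simp
  qed
  have uniq: "b1 = b2" if b1: "0 < b1" "b1 < 1" "bpam_eq r p b1" and b2: "0 < b2" "b2 < 1" "bpam_eq r p b2" for b1 b2
  proof -
    have R1: "Rf p (?Z b1) = r" using link_eq(1)[OF p b1(1,2)] b1(3) by simp
    have R2: "Rf p (?Z b2) = r" using link_eq(1)[OF p b2(1,2)] b2(3) by simp
    have l1: "p < ?Z b1" "?Z b1 \<le> 1" using link_eq(2)[OF p b1(1,2)] zle[OF b1] by auto
    have l2: "p < ?Z b2" "?Z b2 \<le> 1" using link_eq(2)[OF p b2(1,2)] zle[OF b2] by auto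
    have zeq: "?Z b1 = ?Z b2"
    proof (rule ccontr)
      assume "?Z b1 \<noteq> ?Z b2"
      then consider "?Z b1 < ?Z b2" | "?Z b2 < ?Z b1" by linarith
      then show False
      proof cases
        case 1 then have "Rf p (?Z b1) < Rf p (?Z b2)" using p l1 l2 by (intro R_mono) auto
        then show False using R1 R2 by simp
      next
        case 2 then have "Rf p (?Z b2) < Rf p (?Z b1)" using p l1 l2 by (intro R_mono) auto
        then show False using R1 R2 by simp
      qed
    qed
    have "0 < b1*p" using b1 p by simp
    then have v1: "0 < b1*p + 1 - b1" using b1 by linarith
    have "0 < b2*p" using b2 p by simp
    then have v2: "0 < b2*p + 1 - b2" using b2 by linarith
    have "(b1 + p - b1*p) * (b2*p + 1 - b2) = (b2 + p - b2*p) * (b1*p + 1 - b1)"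
      using zeq v1 v2 by (simp add: field_simps)
    moreover have "(b1 + p - b1*p) * (b2*p + 1 - b2) - (b2 + p - b2*p) * (b1*p + 1 - b1)
        = ((1-p)*(1+p)) * (b1 - b2)" by algebra
    ultimately have "((1-p)*(1+p)) * (b1 - b2) = 0" by simp
    moreover have "(1-p)*(1+p) \<noteq> 0" using p by simp
    ultimately show ?thesis by simp
  qed
  have ex: "\<exists>b. 0 < b \<and> b < 1 \<and> bpam_eq r p b"
  proof -
    have "\<exists>z\<ge>p. z \<le> 1 \<and> Rf p z = r"
      using p r Rf_cont[OF p] by (intro IVT') (auto simp: Rf_pp Rf_p1)
    then obtain z where z: "p \<le> z" "z \<le> 1" "Rf p z = r" by blast
    have "z \<noteq> p" using z r Rf_pp by auto
    with z have zp: "p < z" by simp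
    have pz1: "p * z < 1" using p z by (intro pz_lt1) auto
    define b where "b = (z - p) / ((1-p)*(1+z))"
    have den: "0 < (1-p)*(1+z)" using p zp by (intro mult_pos_pos) auto
    have b0: "0 < b" unfolding b_def using zp den by simp
    have "z - p < (1-p)*(1+z)" using pz1 by (simp add: algebra_simps)
    then have b1: "b < 1" unfolding b_def using den by simp
    have "1 + z \<noteq> 0" "1 - p \<noteq> 0" "1 + p \<noteq> 0" using p zp by auto
    have nz: "1 + z \<noteq> 0" "1 - p \<noteq> 0" "1 + p \<noteq> 0" using p zp by auto
    have bq: "b*(1-p) = (z-p)/(1+z)" unfolding b_def using nz by simp
    have e1: "(b + p - b*p) = z*(1+p)/(1+z)"
    proof -
      have "b + p - b*p = b*(1-p) + p" by algebra
      also have "\<dots> = (z-p)/(1+z) + p" using bq by simp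
      also have "\<dots> = z*(1+p)/(1+z)" using nz by (simp add: field_simps)
      finally show ?thesis .
    qed
    have e2: "(b*p + 1 - b) = (1+p)/(1+z)"
    proof -
      have "b*p + 1 - b = 1 - b*(1-p)" by algebra
      also have "\<dots> = 1 - (z-p)/(1+z)" using bq by simp
      also have "\<dots> = (1+p)/(1+z)" using nz by (simp add: field_simps)
      finally show ?thesis .
    qed
    have "(b + p - b*p) / (b*p + 1 - b) = z" unfolding e1 e2 using nz by simp
    then have "bpam_eq r p b" using link_eq(1)[OF p b0 b1] z by simp
    then show ?thesis using b0 b1 by blast
  qed
  have "\<exists>!b. 0 < b \<and> b < 1 \<and> bpam_eq r p b" using ex uniq by blast
  then have "0 < (THE b. 0 < b \<and> b < 1 \<and> bpam_eq r p b) \<and> (THE b. 0 < b \<and> b < 1 \<and> bpam_eq r p b) < 1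
    \<and> bpam_eq r p (THE b. 0 < b \<and> b < 1 \<and> bpam_eq r p b)" by (rule theI')
  then show ?thesis unfolding bpam_alpha_def .
qed


lemma aux1: fixes p a b c e d :: real assumes "d \<noteq> 0" "c \<noteq> 0" "e \<noteq> 0"
  shows "p*(a/d)*(b/d)/((c/d)*(e/d)) = p*a*b/(c*e)"
  using assms by (simp add: field_simps)

lemma aux2: fixes x U A B C D p :: real assumes "x \<noteq> 0" "U \<noteq> 0" "B \<noteq> 0" "D \<noteq> 0" "C \<noteq> 0"
  shows "(x*(A*p/U^2)/(B/U)) / (x*(C/U^2)/(D/U)) = p*A*D/(C*B)"
  using assms by (simp add: field_simps power2_eq_square)

lemma G_eq_H:
  assumes p: "0 < p" "p < 1" and z: "p < z" "z \<le> 1" and r: "r = Rf p z"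
  shows "p*((1-r)*z^2+r)*(p*r+(1-r)*z)/(((1-r)*z^2+p^2*r)*(r+p*(1-r)*z)) = Hf p z"
proof -
  have Rdp: "0 < Rd p z" using p z by (intro Rd_pos pz_lt1) auto
  have rr: "r = Rn p z / Rd p z" using r unfolding Rf_def .
  have k1: "(Rd p z - Rn p z)*z^2 + Rn p z = z*(1+z)*Ap p z" unfolding Rd_def Rn_def Ap_def by algebra
  have k2: "p*Rn p z + (Rd p z - Rn p z)*z = z*(1+p)*Bp p z" unfolding Rd_def Rn_def Bp_def by algebra
  have k3: "(Rd p z - Rn p z)*z^2 + p^2*Rn p z = z*Cp p z" unfolding Rd_def Rn_def Cp_def by algebra
  have k4: "Rn p z + p*(Rd p z - Rn p z)*z = z*(1+p)*Dp p z" unfolding Rd_def Rn_def Dp_def by algebra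
  have f1: "(1-r)*z^2+r = z*(1+z)*Ap p z / Rd p z"
    unfolding k1[symmetric] rr using Rdp by (simp add: field_simps)
  have f2: "p*r+(1-r)*z = z*(1+p)*Bp p z / Rd p z"
    unfolding k2[symmetric] rr using Rdp by (simp add: field_simps)
  have f3: "(1-r)*z^2+p^2*r = z*Cp p z / Rd p z"
    unfolding k3[symmetric] rr using Rdp by (simp add: field_simps)
  have f4: "r+p*(1-r)*z = z*(1+p)*Dp p z / Rd p z"
    unfolding k4[symmetric] rr using Rdp by (simp add: field_simps)
  have C: "0 < Cp p z" "0 < Dp p z" using p z by (intro Cp_cpos Dp_cpos; auto)+
  have "0 < z" "0 < 1 + p" using p z by auto
  then have nz: "z*Cp p z \<noteq> 0" "z*(1+p)*Dp p z \<noteq> 0" "z*z*(1+p) \<noteq> 0" using C by auto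
  have "p*(z*(1+z)*Ap p z / Rd p z)*(z*(1+p)*Bp p z / Rd p z)/((z*Cp p z / Rd p z)*(z*(1+p)*Dp p z / Rd p z))
      = p*(z*(1+z)*Ap p z)*(z*(1+p)*Bp p z)/((z*Cp p z)*(z*(1+p)*Dp p z))"
    using Rdp nz by (intro aux1) auto
  also have "\<dots> = (z*z*(1+p)) * (p*(1+z)*Ap p z*Bp p z) / ((z*z*(1+p)) * (Cp p z * Dp p z))"
    by (simp add: algebra_simps)
  also have "\<dots> = (p*(1+z)*Ap p z*Bp p z) / (Cp p z * Dp p z)"
    using nz(3) by (rule mult_divide_mult_cancel_left)
  finally show ?thesis unfolding f1 f2 f3 f4 Hf_def Hn_def Hd_def .
qed

lemma aux3: fixes r V X a p U :: real
  shows "((1-r)/V)/X * ((1-a)/V) + (p*r/U)/X * (p*(1-a)/U) = (1-a)*((1-r)/V^2 + p^2*r/U^2)/X"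
  unfolding divide_inverse power2_eq_square inverse_mult_distrib by algebra

lemma aux4: fixes r V X a p U :: real
  shows "((p*(1-r)/V)/X) * ((1-a)/V) + ((r/U)/X) * (p*(1-a)/U) = (1-a)*(((1-r)/V^2 + r/U^2)*p)/X"
  unfolding divide_inverse power2_eq_square inverse_mult_distrib by algebra

lemma q_ratio:
  assumes p: "0 < p" "p < 1" and a: "0 < a" "a < 1" and r: "0 < r" "r < 1"
    and al: "bpam_alpha r p = a"
  defines "z \<equiv> (a + p - a*p) / (a*p + 1 - a)"
  shows "q_RB r p / q_BB r p = p*((1-r)*z^2+r)*(p*r+(1-r)*z)/(((1-r)*z^2+p^2*r)*(r+p*(1-r)*z))"
proof -
  define U where "U = a + p*(1-a)"
  define V where "V = a*p + 1 - a"
  have "0 < p*(1-a)" using p a by (intro mult_pos_pos) auto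
  then have U: "0 < U" unfolding U_def using a by simp
  have "0 < a*p" using p a by simp
  then have V: "0 < V" unfolding V_def using a by simp
  have V2: "p*a + 1 - a = V" unfolding V_def by simp
  have zUV: "z = U / V" unfolding z_def U_def V_def by (simp add: algebra_simps)
  have z0: "0 < z" unfolding zUV using U V by simp
  have a1: "1 - a \<noteq> 0" using a by simp
  have P1: "0 < (1-r)*z^2+p^2*r" using r z0 p by (intro add_pos_pos mult_pos_pos) auto
  have P2: "0 < p*r+(1-r)*z" using r z0 p by (intro add_pos_pos mult_pos_pos) auto
  have P3: "0 < r+p*(1-r)*z" using r z0 p by (intro add_pos_pos mult_pos_pos) auto
  have P4: "0 < (1-r)*z^2+r" using r z0 p by (intro add_pos_pos mult_pos_pos) auto
  have DB: "D_B r p a = (r*p + (1-r)*z)/U"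
    unfolding D_B_def U_def[symmetric] V_def[symmetric] zUV using U V by (simp add: field_simps)
  have DR: "D_R r p a = (r + p*(1-r)*z)/U"
    unfolding D_R_def U_def[symmetric] V_def[symmetric] zUV using U V by (simp add: field_simps)
  have S1: "(1-r)/V^2 + p^2*r/U^2 = ((1-r)*z^2 + p^2*r)/U^2"
    unfolding zUV using U V by (simp add: field_simps)
  have S2: "(1-r)/V^2 + r/U^2 = ((1-r)*z^2 + r)/U^2"
    unfolding zUV using U V by (simp add: field_simps)
  have qB: "q_BB r p = (1-a)*((1-r)/V^2 + p^2*r/U^2)/D_B r p a"
    unfolding q_BB_def Let_def al p_in_BB_def p_in_BR_def p_out_BB_def p_out_RB_def
      U_def[symmetric] V_def[symmetric] V2 by (rule aux3)
  have qR: "q_RB r p = (1-a)*(((1-r)/V^2 + r/U^2)*p)/D_R r p a"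
    unfolding q_RB_def Let_def al p_in_RB_def p_in_RR_def p_out_BB_def p_out_RB_def
      U_def[symmetric] V_def[symmetric] V2 by (rule aux4)
  have hB: "q_BB r p = (1-a) * (((1-r)*z^2 + p^2*r)/U^2) / ((r*p + (1-r)*z)/U)"
    unfolding qB DB S1 ..
  have hR: "q_RB r p = (1-a) * (((1-r)*z^2 + r)*p/U^2) / ((r + p*(1-r)*z)/U)"
    unfolding qR DR S2 by simp
  have "r*p + (1-r)*z = p*r+(1-r)*z" by simp
  show ?thesis unfolding hB hR \<open>r*p + (1-r)*z = p*r+(1-r)*z\<close>
    using U a1 P1 P2 P3 P4 by (subst aux2) (auto simp: algebra_simps)
qed


lemma alpha_one:
  assumes "0 < r" "r < 1"
  shows "bpam_alpha r 1 = r"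
proof -
  have eq: "bpam_eq r 1 b \<longleftrightarrow> b = r" for b
    unfolding bpam_eq_def by (auto simp: algebra_simps)
  have "\<exists>!b. 0 < b \<and> b < 1 \<and> bpam_eq r 1 b" using assms eq by auto
  moreover have "0 < r \<and> r < 1 \<and> bpam_eq r 1 r" using assms eq by auto
  ultimately show ?thesis unfolding bpam_alpha_def by (rule the1_equality)
qed

lemma F_one:
  assumes "0 < r" "r < 1"
  shows "F_ratio t r 1 = 1"
proof -
  have a: "bpam_alpha r 1 = r" using alpha_one[OF assms] .
  have "1 - r \<noteq> 0" using assms by simp
  then show ?thesis
    unfolding F_ratio_def q_RB_def q_BB_def Let_def a p_in_BB_def p_in_BR_def p_in_RB_def p_in_RR_def
      p_out_BB_def p_out_RB_def D_B_def D_R_def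
    by (simp add: algebra_simps)
qed

lemma F_link:
  assumes p: "0 < p" "p < 1" and r: "0 < r" "r \<le> 1/2"
  defines "z \<equiv> (bpam_alpha r p + p - bpam_alpha r p * p) / (bpam_alpha r p * p + 1 - bpam_alpha r p)"
  shows "p < z \<and> z \<le> 1 \<and> Rf p z = r \<and> F_ratio t r p = Hf p z"
proof -
  define a where "a = bpam_alpha r p"
  have A: "0 < a" "a < 1" "bpam_eq r p a" using alpha_props[OF p r] unfolding a_def by auto
  have z: "z = (a + p - a*p) / (a*p + 1 - a)" unfolding z_def a_def ..
  have Rz: "Rf p z = r" using link_eq(1)[OF p A(1,2)] A(3) z by simp
  have pz: "p < z" using link_eq(2)[OF p A(1,2)] z by simp
  have pz1: "p * z < 1" using link_eq(3)[OF p A(1,2)] z by simp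
  have z1: "z \<le> 1"
  proof (rule ccontr)
    assume "\<not> z \<le> 1"
    then have "1/2 < Rf p z" using p pz1 by (intro Rf_gt_half) auto
    then show False using Rz r by simp
  qed
  have "F_ratio t r p = p*((1-r)*z^2+r)*(p*r+(1-r)*z)/(((1-r)*z^2+p^2*r)*(r+p*(1-r)*z))"
    unfolding F_ratio_def z using q_ratio[OF p A(1,2)] r a_def by simp
  also have "\<dots> = Hf p z" using p pz z1 Rz by (intro G_eq_H) auto
  finally show ?thesis using pz z1 Rz by simp
qed

theorem proposition2:
  fixes r :: real and t :: nat
  assumes "0 < r" and "r \<le> 1/2" and "t \<ge> 1"
  shows "strict_mono_on {0<..1} (F_ratio t r) \<and> F_ratio t r 1 = 1"
proof -
  have r1: "r < 1" using assms by simp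
  have F1: "F_ratio t r 1 = 1" using F_one[OF assms(1) r1] .
  define Z where "Z x = (bpam_alpha r x + x - bpam_alpha r x * x) / (bpam_alpha r x * x + 1 - bpam_alpha r x)" for x
  have key: "x < Z x \<and> Z x \<le> 1 \<and> Rf x (Z x) = r \<and> F_ratio t r x = Hf x (Z x)" if "0 < x" "x < 1" for x
    unfolding Z_def using F_link[OF that assms(1,2)] by simp
  have "F_ratio t r x < F_ratio t r y" if xy: "x \<in> {0<..1}" "y \<in> {0<..1}" "x < y" for x y
  proof -
    have x: "0 < x" "x < 1" using xy by auto
    obtain z1 where z1: "x < z1" "z1 \<le> 1" "Rf x z1 = r" "F_ratio t r x = Hf x z1"
      using key[OF x] by blast
    show ?thesis
    proof (cases "y = 1")
      case True
      have "Hf x z1 < Hf x x" using x z1 by (intro H_anti) auto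
      then show ?thesis using z1 F1 True Hf_pp[OF x] by simp
    next
      case False
      then have y: "0 < y" "y < 1" using xy by auto
      obtain z2 where z2: "y < z2" "z2 \<le> 1" "Rf y z2 = r" "F_ratio t r y = Hf y z2"
        using key[OF y] by blast
      define m where "m = z2 / y"
      have my: "m * y = z2" unfolding m_def using y by simp
      have m1: "1 < m" unfolding m_def using y z2 by simp
      have "x * 1 < x * m" using m1 x by (intro mult_strict_left_mono) auto
      then have xm: "x < m * x" by (simp add: mult.commute)
      have "m * x < m * y" using m1 xy by simp
      then have mx1: "m * x < 1" using my z2 by simp
      have Rr: "Rf x (m*x) < Rf y (m*y)" using m1 x xy my z2 by (intro R_ray) auto
      have mxz: "m * x < z1"
      proof (rule ccontr)
        assume "\<not> m * x < z1"
        then have "z1 \<le> m * x" by simp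
        then have "Rf x z1 \<le> Rf x (m*x)"
        proof (cases "z1 = m * x")
          case False
          with \<open>z1 \<le> m * x\<close> have "z1 < m * x" by simp
          then show ?thesis using x z1 mx1 by (intro less_imp_le R_mono) auto
        qed simp
        then show False using Rr my z1 z2 by simp
      qed
      have "Hf x z1 < Hf x (m*x)" using x xm mxz z1 by (intro H_anti) auto
      also have "\<dots> < Hf y (m*y)" using m1 x xy my z2 by (intro H_ray) auto
      finally show ?thesis using z1 z2 my by simp
    qed
  qed
  then have "strict_mono_on {0<..1} (F_ratio t r)" by (intro strict_mono_onI) auto
  then show ?thesis using F1 by simp
qed

end
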